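(* If $D$ is finite and the Fischer space $\Pi(D)$ has at least one line that is not a vanishing set, then $\overline{\mathcal{A}}=\mathcal{A}(D)/\mathcal{V}(D)$ is the direct product of all its minimal ideals. Furthermore, $G$ transitively permutes the minimal ideals of $\overline{\mathcal{A}}$.
   Context: Let $G$ be a group generated by a conjugacy class $D$ of involutions such that for all $d,e\in D$ the order of $de$ is $1$, $2$ or $3$. The Fischer space $\Pi(D)$ has point set $D$ and lines the triples $\{d,e,d^e\}$ with $d,e\in D$ non-commuting. $\mathcal{A}(D)$ is the $\mathbb{F}_2$-vector space of finite subsets of $D$ under symmetric difference (basis $D$), with bilinear product determined by $d*e=d+e+f$ if $\{d,e,f\}$ is a line and $d*e=0$ otherwise; $G$ acts on it by linear extension of conjugation. The bilinear form $\langle\cdot,\cdot\rangle$ is determined by $\langle d,e\rangle=1$ if $d,e$ do not commute and $0$ otherwise; $\mathcal{V}(D)$ is its radical, and a finite subset of $D$ is called vanishing if it lies in $\mathcal{V}(D)$. *)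

theory Defs
  imports "HOL-Algebra.Multiplicative_Group" "HOL-Algebra.Generated_Groups" "HOL-Algebra.FiniteProduct"
begin

definition three_transp :: "('a, 'b) monoid_scheme \<Rightarrow> 'a set \<Rightarrow> bool" where
  "three_transp G D \<longleftrightarrow> group G \<and> D \<subseteq> carrier G
     \<and> (\<exists>d0 \<in> carrier G. D = {inv\<^bsub>G\<^esub> g \<otimes>\<^bsub>G\<^esub> d0 \<otimes>\<^bsub>G\<^esub> g | g. g \<in> carrier G})
     \<and> (\<forall>d \<in> D. d \<noteq> \<one>\<^bsub>G\<^esub> \<and> d \<otimes>\<^bsub>G\<^esub> d = \<one>\<^bsub>G\<^esub>)
     \<and> generate G D = carrier G
     \<and> (\<forall>d \<in> D. \<forall>e \<in> D. group.ord G (d \<otimes>\<^bsub>G\<^esub> e) \<in> {1, 2, 3})"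

definition conjg :: "('a, 'b) monoid_scheme \<Rightarrow> 'a \<Rightarrow> 'a \<Rightarrow> 'a" where
  "conjg G d g = inv\<^bsub>G\<^esub> g \<otimes>\<^bsub>G\<^esub> d \<otimes>\<^bsub>G\<^esub> g"

definition commutes :: "('a, 'b) monoid_scheme \<Rightarrow> 'a \<Rightarrow> 'a \<Rightarrow> bool" where
  "commutes G d e \<longleftrightarrow> d \<otimes>\<^bsub>G\<^esub> e = e \<otimes>\<^bsub>G\<^esub> d"

text \<open>Symmetric difference = addition in the F_2-space of finite subsets of D.\<close>
definition sdiff :: "'a set \<Rightarrow> 'a set \<Rightarrow> 'a set" where
  "sdiff X Y = (X - Y) \<union> (Y - X)"

definition fischer_lines :: "('a, 'b) monoid_scheme \<Rightarrow> 'a set \<Rightarrow> 'a set set" where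
  "fischer_lines G D = {{d, e, conjg G d e} | d e. d \<in> D \<and> e \<in> D \<and> \<not> commutes G d e}"

definition Aalg :: "'a set \<Rightarrow> 'a set set" where
  "Aalg D = {X. finite X \<and> X \<subseteq> D}"

definition bmul :: "('a, 'b) monoid_scheme \<Rightarrow> 'a \<Rightarrow> 'a \<Rightarrow> 'a set" where
  "bmul G d e = (if commutes G d e then {} else sdiff (sdiff {d} {e}) {conjg G d e})"

text \<open>Bilinear extension over F_2: coefficient of f in X*Y is the parity of the
  number of pairs (d,e) in X x Y whose basis product contains f.\<close>
definition amul :: "('a, 'b) monoid_scheme \<Rightarrow> 'a set \<Rightarrow> 'a set \<Rightarrow> 'a set" where
  "amul G X Y = {f. odd (card {(d, e). d \<in> X \<and> e \<in> Y \<and> f \<in> bmul G d e})}"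

text \<open>The bilinear form, with values in F_2 represented as bool (True = 1).\<close>
definition bform :: "('a, 'b) monoid_scheme \<Rightarrow> 'a set \<Rightarrow> 'a set \<Rightarrow> bool" where
  "bform G X Y = odd (card {(d, e). d \<in> X \<and> e \<in> Y \<and> \<not> commutes G d e})"

definition Vrad :: "('a, 'b) monoid_scheme \<Rightarrow> 'a set \<Rightarrow> 'a set set" where
  "Vrad G D = {X \<in> Aalg D. \<forall>Y \<in> Aalg D. \<not> bform G X Y}"

definition qcls :: "('a, 'b) monoid_scheme \<Rightarrow> 'a set \<Rightarrow> 'a set \<Rightarrow> 'a set set" where
  "qcls G D X = {sdiff X v | v. v \<in> Vrad G D}"

definition Abar :: "('a, 'b) monoid_scheme \<Rightarrow> 'a set \<Rightarrow> 'a set set set" where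
  "Abar G D = qcls G D ` Aalg D"

definition qzero :: "('a, 'b) monoid_scheme \<Rightarrow> 'a set \<Rightarrow> 'a set set" where
  "qzero G D = qcls G D {}"

definition qadd :: "'a set set \<Rightarrow> 'a set set \<Rightarrow> 'a set set" where
  "qadd P Q = {sdiff p q | p q. p \<in> P \<and> q \<in> Q}"

definition qmul :: "('a, 'b) monoid_scheme \<Rightarrow> 'a set \<Rightarrow> 'a set set \<Rightarrow> 'a set set \<Rightarrow> 'a set set" where
  "qmul G D P Q = {sdiff (amul G p q) v | p q v. p \<in> P \<and> q \<in> Q \<and> v \<in> Vrad G D}"

text \<open>Additive group of the quotient, as a HOL-Algebra monoid (for finite sums).\<close>
definition Abar_add :: "('a, 'b) monoid_scheme \<Rightarrow> 'a set \<Rightarrow> 'a set set monoid" where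
  "Abar_add G D = \<lparr>carrier = Abar G D, mult = qadd, one = qzero G D\<rparr>"

text \<open>Ideals of the quotient algebra (over F_2 a subspace is a subset containing 0
  and closed under addition).\<close>
definition qideal :: "('a, 'b) monoid_scheme \<Rightarrow> 'a set \<Rightarrow> 'a set set set \<Rightarrow> bool" where
  "qideal G D J \<longleftrightarrow> J \<subseteq> Abar G D \<and> qzero G D \<in> J
     \<and> (\<forall>P \<in> J. \<forall>Q \<in> J. qadd P Q \<in> J)
     \<and> (\<forall>P \<in> J. \<forall>Q \<in> Abar G D. qmul G D P Q \<in> J \<and> qmul G D Q P \<in> J)"

definition min_qideal :: "('a, 'b) monoid_scheme \<Rightarrow> 'a set \<Rightarrow> 'a set set set \<Rightarrow> bool" where
  "min_qideal G D J \<longleftrightarrow> qideal G D J \<and> J \<noteq> {qzero G D}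
     \<and> (\<forall>K. qideal G D K \<and> K \<subseteq> J \<longrightarrow> K = {qzero G D} \<or> K = J)"

definition gact_set :: "('a, 'b) monoid_scheme \<Rightarrow> 'a \<Rightarrow> 'a set \<Rightarrow> 'a set" where
  "gact_set G g X = (\<lambda>d. conjg G d g) ` X"

definition gact_q :: "('a, 'b) monoid_scheme \<Rightarrow> 'a \<Rightarrow> 'a set set \<Rightarrow> 'a set set" where
  "gact_q G g P = gact_set G g ` P"

end

theory Submission
  imports Defs
begin


locale absalg = comm_monoid M for M :: "('e, 'm) monoid_scheme" (structure) +
  fixes mul :: "'e \<Rightarrow> 'e \<Rightarrow> 'e" and form :: "'e \<Rightarrow> 'e \<Rightarrow> bool"
    and H :: "('g, 'c) monoid_scheme" and act :: "'g \<Rightarrow> 'e \<Rightarrow> 'e"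
    and Dg :: "'g set" and dl :: "'g \<Rightarrow> 'e"
  assumes selfinv: "x \<in> carrier M \<Longrightarrow> x \<otimes> x = \<one>"
    and fin: "finite (carrier M)"
    and mul_closed: "x \<in> carrier M \<Longrightarrow> y \<in> carrier M \<Longrightarrow> mul x y \<in> carrier M"
    and mul_comm: "x \<in> carrier M \<Longrightarrow> y \<in> carrier M \<Longrightarrow> mul x y = mul y x"
    and mul_add: "x \<in> carrier M \<Longrightarrow> y \<in> carrier M \<Longrightarrow> z \<in> carrier M \<Longrightarrow> mul (x \<otimes> y) z = mul x z \<otimes> mul y z"
    and form_sym: "x \<in> carrier M \<Longrightarrow> y \<in> carrier M \<Longrightarrow> form x y = form y x"
    and form_add: "x \<in> carrier M \<Longrightarrow> y \<in> carrier M \<Longrightarrow> z \<in> carrier M \<Longrightarrow> form (x \<otimes> y) z = (form x z \<noteq> form y z)"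
    and form_assoc: "x \<in> carrier M \<Longrightarrow> y \<in> carrier M \<Longrightarrow> z \<in> carrier M \<Longrightarrow> form (mul x y) z = form x (mul y z)"
    and nondeg: "x \<in> carrier M \<Longrightarrow> x \<noteq> \<one> \<Longrightarrow> \<exists>y\<in>carrier M. form x y"
    and grpH: "group H"
    and act_closed: "g \<in> carrier H \<Longrightarrow> x \<in> carrier M \<Longrightarrow> act g x \<in> carrier M"
    and act_add: "g \<in> carrier H \<Longrightarrow> x \<in> carrier M \<Longrightarrow> y \<in> carrier M \<Longrightarrow> act g (x \<otimes> y) = act g x \<otimes> act g y"
    and act_mul: "g \<in> carrier H \<Longrightarrow> x \<in> carrier M \<Longrightarrow> y \<in> carrier M \<Longrightarrow> act g (mul x y) = mul (act g x) (act g y)"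
    and act_form: "g \<in> carrier H \<Longrightarrow> x \<in> carrier M \<Longrightarrow> y \<in> carrier M \<Longrightarrow> form (act g x) (act g y) = form x y"
    and act_comp: "g \<in> carrier H \<Longrightarrow> h \<in> carrier H \<Longrightarrow> x \<in> carrier M \<Longrightarrow> act (g \<otimes>\<^bsub>H\<^esub> h) x = act h (act g x)"
    and act_one: "x \<in> carrier M \<Longrightarrow> act \<one>\<^bsub>H\<^esub> x = x"
    and Dg_sub: "Dg \<subseteq> carrier H"
    and dl_closed: "d \<in> Dg \<Longrightarrow> dl d \<in> carrier M"
    and dl_conj: "d \<in> Dg \<Longrightarrow> e \<in> Dg \<Longrightarrow> \<exists>g\<in>carrier H. act g (dl d) = dl e"
    and dl_mul: "d \<in> Dg \<Longrightarrow> x \<in> carrier M \<Longrightarrow>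
        mul (dl d) x = ((if form (dl d) x then dl d else \<one>) \<otimes> x) \<otimes> act d x"
    and span: "\<one> \<in> S \<Longrightarrow> (\<And>x d. x \<in> S \<Longrightarrow> d \<in> Dg \<Longrightarrow> x \<otimes> dl d \<in> S) \<Longrightarrow> carrier M \<subseteq> S"
    and nontriv: "\<exists>x\<in>carrier M. \<exists>y\<in>carrier M. mul x y \<noteq> \<one>"
begin

definition aideal :: "'e set \<Rightarrow> bool" where
  "aideal J \<longleftrightarrow> J \<subseteq> carrier M \<and> \<one> \<in> J
     \<and> (\<forall>P \<in> J. \<forall>Q \<in> J. P \<otimes> Q \<in> J)
     \<and> (\<forall>P \<in> J. \<forall>Q \<in> carrier M. mul P Q \<in> J \<and> mul Q P \<in> J)"

definition amin :: "'e set \<Rightarrow> bool" where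
  "amin J \<longleftrightarrow> aideal J \<and> J \<noteq> {\<one>} \<and> (\<forall>K. aideal K \<and> K \<subseteq> J \<longrightarrow> K = {\<one>} \<or> K = J)"

lemma act_zero: "g \<in> carrier H \<Longrightarrow> act g \<one> = \<one>"
proof -
  assume g: "g \<in> carrier H"
  have "act g \<one> = act g \<one> \<otimes> act g \<one>" using act_add[OF g one_closed one_closed] by simp
  also have "\<dots> = \<one>" using selfinv act_closed g by simp
  finally show ?thesis .
qed

lemma mul_zero: "y \<in> carrier M \<Longrightarrow> mul \<one> y = \<one>"
proof -
  assume y: "y \<in> carrier M"
  have "mul \<one> y = mul \<one> y \<otimes> mul \<one> y" using mul_add[OF one_closed one_closed y] by simp
  also have "\<dots> = \<one>" using selfinv mul_closed y by simp
  finally show ?thesis .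
qed

lemma mul_zero2: "y \<in> carrier M \<Longrightarrow> mul y \<one> = \<one>"
  using mul_zero[of y] mul_comm[of y \<one>] by simp

lemma form_zero: "y \<in> carrier M \<Longrightarrow> \<not> form \<one> y"
  using form_add[of \<one> \<one> y] by simp

lemma form_zero2: "y \<in> carrier M \<Longrightarrow> \<not> form y \<one>"
  using form_zero[of y] form_sym[of y \<one>] by simp

lemma form_add2: "x \<in> carrier M \<Longrightarrow> y \<in> carrier M \<Longrightarrow> z \<in> carrier M \<Longrightarrow> form z (x \<otimes> y) = (form z x \<noteq> form z y)"
  using form_add[of x y z] form_sym[of z "x \<otimes> y"] form_sym[of z x] form_sym[of z y] by simp

lemma act_inv1: "g \<in> carrier H \<Longrightarrow> x \<in> carrier M \<Longrightarrow> act (inv\<^bsub>H\<^esub> g) (act g x) = x"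
  using act_comp[of g "inv\<^bsub>H\<^esub> g" x] grpH act_one by (simp add: group.r_inv group.inv_closed)

lemma act_inv2: "g \<in> carrier H \<Longrightarrow> x \<in> carrier M \<Longrightarrow> act g (act (inv\<^bsub>H\<^esub> g) x) = x"
  using act_comp[of "inv\<^bsub>H\<^esub> g" g x] grpH act_one by (simp add: group.l_inv group.inv_closed)

lemma act_img_inv: "g \<in> carrier H \<Longrightarrow> K \<subseteq> carrier M \<Longrightarrow> act g ` act (inv\<^bsub>H\<^esub> g) ` K = K"
proof -
  assume a: "g \<in> carrier H" "K \<subseteq> carrier M"
  have "(\<lambda>x. act g (act (inv\<^bsub>H\<^esub> g) x)) ` K = (\<lambda>x. x) ` K"
    by (rule image_cong) (use act_inv2 a in auto)
  then show ?thesis by (simp add: image_image)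
qed

lemma act_img_inv1: "g \<in> carrier H \<Longrightarrow> K \<subseteq> carrier M \<Longrightarrow> act (inv\<^bsub>H\<^esub> g) ` act g ` K = K"
proof -
  assume a: "g \<in> carrier H" "K \<subseteq> carrier M"
  have "(\<lambda>x. act (inv\<^bsub>H\<^esub> g) (act g x)) ` K = (\<lambda>x. x) ` K"
    by (rule image_cong) (use act_inv1 a in auto)
  then show ?thesis by (simp add: image_image)
qed

lemma inv_closedH: "g \<in> carrier H \<Longrightarrow> inv\<^bsub>H\<^esub> g \<in> carrier H"
  by (rule group.inv_closed[OF grpH])

lemma mulH_closed: "g \<in> carrier H \<Longrightarrow> h \<in> carrier H \<Longrightarrow> g \<otimes>\<^bsub>H\<^esub> h \<in> carrier H"
  by (rule monoid.m_closed[OF group.is_monoid[OF grpH]])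

lemma aidealD: assumes "aideal J"
  shows "J \<subseteq> carrier M" "\<one> \<in> J" "\<And>P Q. P \<in> J \<Longrightarrow> Q \<in> J \<Longrightarrow> P \<otimes> Q \<in> J"
    "\<And>P Q. P \<in> J \<Longrightarrow> Q \<in> carrier M \<Longrightarrow> mul P Q \<in> J"
    "\<And>P Q. P \<in> J \<Longrightarrow> Q \<in> carrier M \<Longrightarrow> mul Q P \<in> J"
  using assms unfolding aideal_def by blast+

lemma invariant_full:
  assumes J: "aideal J" and inv: "\<And>g x. g \<in> carrier H \<Longrightarrow> x \<in> J \<Longrightarrow> act g x \<in> J"
    and x: "x \<in> J" "x \<noteq> \<one>"
  shows "J = carrier M"
proof -
  note JD = aidealD[OF J]
  have JB: "J \<subseteq> carrier M" using JD(1) .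
  have xB: "x \<in> carrier M" using x JB by blast
  have "\<exists>d\<in>Dg. form (dl d) x"
  proof (rule ccontr)
    assume "\<not> ?thesis"
    then have no: "\<And>d. d \<in> Dg \<Longrightarrow> \<not> form x (dl d)" using form_sym[OF xB dl_closed] by blast
    have "carrier M \<subseteq> {y \<in> carrier M. \<not> form x y}"
    proof (rule span)
      show "\<one> \<in> {y \<in> carrier M. \<not> form x y}" using form_zero2[OF xB] by simp
      show "z \<otimes> dl e \<in> {y \<in> carrier M. \<not> form x y}" if "z \<in> {y \<in> carrier M. \<not> form x y}" "e \<in> Dg" for z e
        using that form_add2[OF _ dl_closed xB, of z e] no[of e] dl_closed[of e] by simp
    qed
    moreover obtain y where "y \<in> carrier M" "form x y" using nondeg xB x by blast
    ultimately show False by blast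
  qed
  then obtain d where d: "d \<in> Dg" "form (dl d) x" by blast
  have dH: "d \<in> carrier H" using d Dg_sub by blast
  have dB: "dl d \<in> carrier M" using d dl_closed by blast
  have ax: "act d x \<in> carrier M" using act_closed dH xB by blast
  have m: "mul (dl d) x = dl d \<otimes> (x \<otimes> act d x)"
    using dl_mul[OF d(1) xB] d(2) m_assoc[OF dB xB ax] by simp
  have "mul (dl d) x \<otimes> (x \<otimes> act d x) = dl d \<otimes> ((x \<otimes> act d x) \<otimes> (x \<otimes> act d x))"
    unfolding m by (rule m_assoc) (use dB xB ax in auto)
  also have "\<dots> = dl d" using selfinv[of "x \<otimes> act d x"] xB ax dB by simp
  finally have e1: "mul (dl d) x \<otimes> (x \<otimes> act d x) = dl d" .
  have "mul (dl d) x \<in> J" using JD(5)[OF x(1) dB] .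
  moreover have "act d x \<in> J" using inv dH x by blast
  ultimately have dJ: "dl d \<in> J" using JD(3) x(1) e1 by metis
  have allD: "\<And>e. e \<in> Dg \<Longrightarrow> dl e \<in> J"
  proof -
    fix e assume e: "e \<in> Dg"
    obtain g where "g \<in> carrier H" "act g (dl d) = dl e" using dl_conj d(1) e by blast
    then show "dl e \<in> J" using inv[OF _ dJ] by metis
  qed
  have "carrier M \<subseteq> J"
  proof (rule span)
    show "\<one> \<in> J" using JD(2) .
    show "z \<otimes> dl e \<in> J" if "z \<in> J" "e \<in> Dg" for z e
      using JD(3) allD that by blast
  qed
  then show ?thesis using JB by blast
qed

lemma aidealI:
  assumes "J \<subseteq> carrier M" "\<one> \<in> J" "\<And>P Q. P \<in> J \<Longrightarrow> Q \<in> J \<Longrightarrow> P \<otimes> Q \<in> J"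
    "\<And>P Q. P \<in> J \<Longrightarrow> Q \<in> carrier M \<Longrightarrow> mul P Q \<in> J"
  shows "aideal J"
  unfolding aideal_def
proof (intro conjI ballI)
  fix P Q assume P: "P \<in> J" and Q: "Q \<in> carrier M"
  show "mul P Q \<in> J" using assms(4) P Q .
  have "P \<in> carrier M" using assms(1) P by blast
  then have "mul Q P = mul P Q" using mul_comm Q by blast
  then show "mul Q P \<in> J" using assms(4) P Q by simp
qed (use assms in auto)

lemma ann_zero:
  assumes x: "x \<in> carrier M" and a: "\<And>y. y \<in> carrier M \<Longrightarrow> mul x y = \<one>"
  shows "x = \<one>"
proof (rule ccontr)
  assume nx: "x \<noteq> \<one>"
  let ?A = "{x \<in> carrier M. \<forall>y\<in>carrier M. mul x y = \<one>}"
  have id: "aideal ?A"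
  proof (rule aidealI)
    show "?A \<subseteq> carrier M" by blast
    show "\<one> \<in> ?A" using mul_zero by simp
    show "P \<otimes> Q \<in> ?A" if "P \<in> ?A" "Q \<in> ?A" for P Q
      using that mul_add by simp
    show "mul P Q \<in> ?A" if "P \<in> ?A" "Q \<in> carrier M" for P Q
      using that mul_zero by simp
  qed
  have "?A = carrier M"
  proof (rule invariant_full[OF id])
    show "x \<in> ?A" using x a by blast
    show "x \<noteq> \<one>" by fact
    fix g z assume g: "g \<in> carrier H" and z: "z \<in> ?A"
    have "mul (act g z) y = \<one>" if y: "y \<in> carrier M" for y
    proof -
      have "mul (act g z) y = mul (act g z) (act g (act (inv\<^bsub>H\<^esub> g) y))"
        using act_inv2 g y by simp
      also have "\<dots> = act g (mul z (act (inv\<^bsub>H\<^esub> g) y))"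
        using act_mul[OF g _ act_closed[OF inv_closedH[OF g] y], of z] z by simp
      also have "mul z (act (inv\<^bsub>H\<^esub> g) y) = \<one>" using z act_closed inv_closedH g y by blast
      finally show ?thesis using act_zero g by simp
    qed
    then show "act g z \<in> ?A" using act_closed g z by blast
  qed
  then show False using nontriv by auto
qed

lemma act_aideal:
  assumes J: "aideal J" and g: "g \<in> carrier H"
  shows "aideal (act g ` J)"
proof (rule aidealI)
  note JD = aidealD[OF J]
  show "act g ` J \<subseteq> carrier M" using JD(1) act_closed g by blast
  show "\<one> \<in> act g ` J" using JD(2) act_zero g by (metis image_eqI)
  show "P \<otimes> Q \<in> act g ` J" if PQ: "P \<in> act g ` J" "Q \<in> act g ` J" for P Q
  proof -
    obtain a b where ab: "a \<in> J" "b \<in> J" "P = act g a" "Q = act g b" using PQ by blast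
    have "a \<in> carrier M" "b \<in> carrier M" using ab JD(1) by blast+
    then have "P \<otimes> Q = act g (a \<otimes> b)" using act_add[OF g] ab by simp
    then show ?thesis using JD(3) ab by blast
  qed
  show "mul P Q \<in> act g ` J" if PQ: "P \<in> act g ` J" "Q \<in> carrier M" for P Q
  proof -
    obtain a where a: "a \<in> J" "P = act g a" using PQ by blast
    have aB: "a \<in> carrier M" using a JD(1) by blast
    have "mul P Q = mul (act g a) (act g (act (inv\<^bsub>H\<^esub> g) Q))"
      using act_inv2 g PQ a by simp
    also have "\<dots> = act g (mul a (act (inv\<^bsub>H\<^esub> g) Q))"
      using act_mul g aB PQ act_closed inv_closedH by simp
    finally show ?thesis using JD(4) a act_closed inv_closedH g PQ by blast
  qed
qed

lemma act_amin:
  assumes J: "amin J" and g: "g \<in> carrier H"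
  shows "amin (act g ` J)"
proof -
  have Jid: "aideal J" and Jn: "J \<noteq> {\<one>}" and Jm: "\<And>K. aideal K \<Longrightarrow> K \<subseteq> J \<Longrightarrow> K = {\<one>} \<or> K = J"
    using J unfolding amin_def by blast+
  have JB: "J \<subseteq> carrier M" using aidealD(1)[OF Jid] .
  have "act g ` J \<noteq> {\<one>}"
  proof
    assume e: "act g ` J = {\<one>}"
    have "J = act (inv\<^bsub>H\<^esub> g) ` act g ` J" using act_img_inv1 g JB by simp
    also have "\<dots> = {\<one>}" using e act_zero inv_closedH g by simp
    finally show False using Jn by blast
  qed
  moreover have "K = {\<one>} \<or> K = act g ` J" if K: "aideal K" "K \<subseteq> act g ` J" for K
  proof -
    have KB: "K \<subseteq> carrier M" using aidealD(1)[OF K(1)] .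
    have "aideal (act (inv\<^bsub>H\<^esub> g) ` K)" using act_aideal K(1) inv_closedH g by blast
    moreover have "act (inv\<^bsub>H\<^esub> g) ` K \<subseteq> J"
      using K(2) act_img_inv1[OF g JB] by blast
    ultimately have "act (inv\<^bsub>H\<^esub> g) ` K = {\<one>} \<or> act (inv\<^bsub>H\<^esub> g) ` K = J" using Jm by blast
    then show ?thesis
    proof
      assume "act (inv\<^bsub>H\<^esub> g) ` K = {\<one>}"
      then have "act g ` act (inv\<^bsub>H\<^esub> g) ` K = {\<one>}" using act_zero g by simp
      then show ?thesis using act_img_inv[OF g KB] by simp
    next
      assume "act (inv\<^bsub>H\<^esub> g) ` K = J"
      then have "act g ` act (inv\<^bsub>H\<^esub> g) ` K = act g ` J" by simp
      then show ?thesis using act_img_inv[OF g KB] by simp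
    qed
  qed
  ultimately show ?thesis using act_aideal[OF Jid g] unfolding amin_def by blast
qed

lemma aideal_univ: "aideal (carrier M)"
  by (rule aidealI) (auto simp: mul_closed)

lemma exists_amin: "\<exists>J. amin J"
proof -
  let ?S = "{J. aideal J \<and> J \<noteq> {\<one>}}"
  have "carrier M \<noteq> {\<one>}" using nontriv mul_closed by (metis singletonD)
  then have "carrier M \<in> ?S" using aideal_univ by blast
  then obtain J where J: "J \<in> ?S" and Jl: "\<And>K. K \<in> ?S \<Longrightarrow> card J \<le> card K"
    using ex_has_least_nat[of "\<lambda>J. J \<in> ?S" "carrier M" card] by blast
  have "amin J"
    unfolding amin_def
  proof (intro conjI allI impI)
    show "aideal J" "J \<noteq> {\<one>}" using J by auto
    fix K assume K: "aideal K \<and> K \<subseteq> J"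
    show "K = {\<one>} \<or> K = J"
    proof (rule disjCI)
      assume "K \<noteq> J"
      have fJ: "finite J" using J aidealD(1) fin finite_subset by blast
      show "K = {\<one>}"
      proof (rule ccontr)
        assume "K \<noteq> {\<one>}"
        then have "card J \<le> card K" using Jl K by blast
        then have "K = J" using K fJ by (meson card_seteq)
        then show False using \<open>K \<noteq> J\<close> by blast
      qed
    qed
  qed
  then show ?thesis by blast
qed

lemma amin_distinct:
  assumes I: "amin I" and J: "amin J" and ne: "I \<noteq> J"
    and x: "x \<in> I" and y: "y \<in> J"
  shows "mul x y = \<one>"
proof -
  have Iid: "aideal I" and Jid: "aideal J" using I J amin_def by blast+
  have "aideal (I \<inter> J)"
  proof (rule aidealI)
    show "I \<inter> J \<subseteq> carrier M" using aidealD(1)[OF Iid] by blast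
    show "\<one> \<in> I \<inter> J" using aidealD(2)[OF Iid] aidealD(2)[OF Jid] by blast
    show "P \<otimes> Q \<in> I \<inter> J" if "P \<in> I \<inter> J" "Q \<in> I \<inter> J" for P Q
      using aidealD(3)[OF Iid] aidealD(3)[OF Jid] that by blast
    show "mul P Q \<in> I \<inter> J" if "P \<in> I \<inter> J" "Q \<in> carrier M" for P Q
      using aidealD(4)[OF Iid] aidealD(4)[OF Jid] that by blast
  qed
  moreover have "I \<inter> J \<subseteq> I" by blast
  ultimately have "I \<inter> J = {\<one>} \<or> I \<inter> J = I" using I amin_def by blast
  moreover have "I \<inter> J \<noteq> I"
  proof
    assume "I \<inter> J = I"
    then have "I \<subseteq> J" by blast
    then have "I = {\<one>} \<or> I = J" using J Iid amin_def by blast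
    then show False using I ne amin_def by blast
  qed
  ultimately have IJ: "I \<inter> J = {\<one>}" by blast
  have "mul x y \<in> I" using aidealD(4)[OF Iid x] aidealD(1)[OF Jid] y by blast
  moreover have "mul x y \<in> J" using aidealD(5)[OF Jid y] aidealD(1)[OF Iid] x by blast
  ultimately show ?thesis using IJ by blast
qed


lemma W_zero:
  assumes I0: "amin I0" and y: "y \<in> carrier M"
    and orth: "\<And>g x. g \<in> carrier H \<Longrightarrow> x \<in> I0 \<Longrightarrow> \<not> form (act g x) y"
  shows "y = \<one>"
proof (rule ccontr)
  assume ny: "y \<noteq> \<one>"
  have I0id: "aideal I0" using I0 amin_def by blast
  note ID = aidealD[OF I0id]
  let ?W = "{y \<in> carrier M. \<forall>g\<in>carrier H. \<forall>x\<in>I0. \<not> form (act g x) y}"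
  have Wid: "aideal ?W"
  proof (rule aidealI)
    show "?W \<subseteq> carrier M" by blast
    show "\<one> \<in> ?W" using form_zero2 act_closed ID(1) by blast
    show "P \<otimes> Q \<in> ?W" if "P \<in> ?W" "Q \<in> ?W" for P Q
    proof -
      have "\<not> form (act g x) (P \<otimes> Q)" if g: "g \<in> carrier H" and x: "x \<in> I0" for g x
        using form_add2[of P Q "act g x"] that act_closed[OF g] ID(1) x \<open>P \<in> ?W\<close> \<open>Q \<in> ?W\<close> by blast
      then show ?thesis using that by blast
    qed
    show "mul P Q \<in> ?W" if PQ: "P \<in> ?W" "Q \<in> carrier M" for P Q
    proof -
      have "\<not> form (act g x) (mul P Q)" if g: "g \<in> carrier H" and x: "x \<in> I0" for g x
      proof -
        have xB: "x \<in> carrier M" using x ID(1) by blast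
        have gx: "act g x \<in> carrier M" using act_closed g xB by blast
        have "form (act g x) (mul P Q) = form (act g x) (mul Q P)"
          using mul_comm[of P Q] PQ by simp
        also have "\<dots> = form (mul (act g x) Q) P"
          using form_assoc[of "act g x" Q P] gx PQ by simp
        also have "mul (act g x) Q = act g (mul x (act (inv\<^bsub>H\<^esub> g) Q))"
          using act_mul g xB PQ act_closed inv_closedH act_inv2 by simp
        finally have "form (act g x) (mul P Q) = form (act g (mul x (act (inv\<^bsub>H\<^esub> g) Q))) P" .
        moreover have "mul x (act (inv\<^bsub>H\<^esub> g) Q) \<in> I0"
          using ID(4) x act_closed inv_closedH g PQ by blast
        ultimately show ?thesis using PQ g by blast
      qed
      then show ?thesis using mul_closed PQ by blast
    qed
  qed
  have "?W = carrier M"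
  proof (rule invariant_full[OF Wid])
    show "y \<in> ?W" using y orth by blast
    show "y \<noteq> \<one>" by fact
    fix h z assume h: "h \<in> carrier H" and z: "z \<in> ?W"
    have zB: "z \<in> carrier M" using z by blast
    have "\<not> form (act g x) (act h z)" if g: "g \<in> carrier H" and x: "x \<in> I0" for g x
    proof -
      have xB: "x \<in> carrier M" using x ID(1) by blast
      have ih: "inv\<^bsub>H\<^esub> h \<in> carrier H" using inv_closedH h .
      have "act g x = act h (act (inv\<^bsub>H\<^esub> h) (act g x))" using act_inv2 h act_closed g xB by simp
      also have "act (inv\<^bsub>H\<^esub> h) (act g x) = act (g \<otimes>\<^bsub>H\<^esub> inv\<^bsub>H\<^esub> h) x"
        using act_comp[OF g ih xB] by simp
      finally have "form (act g x) (act h z) = form (act (g \<otimes>\<^bsub>H\<^esub> inv\<^bsub>H\<^esub> h) x) z"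
        using act_form[OF h _ zB] act_closed mulH_closed[OF g ih] xB by simp
      then show ?thesis using z mulH_closed[OF g ih] x by blast
    qed
    then show "act h z \<in> ?W" using act_closed h zB by blast
  qed
  moreover obtain x where x: "x \<in> I0" "x \<noteq> \<one>" using I0 ID(2) unfolding amin_def by blast
  moreover obtain w where "w \<in> carrier M" "form x w" using nondeg x ID(1) by blast
  ultimately show False
  proof -
    assume W: "?W = carrier M" and x: "x \<in> I0" "x \<noteq> \<one>" and w: "w \<in> carrier M" "form x w"
    have "w \<in> ?W" using W w by blast
    moreover have "\<one>\<^bsub>H\<^esub> \<in> carrier H" by (rule monoid.one_closed[OF group.is_monoid[OF grpH]])
    ultimately have "\<not> form (act \<one>\<^bsub>H\<^esub> x) w" using x by blast
    then show False using act_one x ID(1) w by auto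
  qed
qed

lemma amin_trans:
  assumes I0: "amin I0" and K: "amin K"
  shows "\<exists>g\<in>carrier H. act g ` I0 = K"
proof (rule ccontr)
  assume nt: "\<not> ?thesis"
  have Kid: "aideal K" using K amin_def by blast
  note KD = aidealD[OF Kid]
  have "aideal I0" using I0 amin_def by blast
  then have I0B: "I0 \<subseteq> carrier M" by (rule aidealD(1))
  have "k = \<one>" if k: "k \<in> K" for k
  proof (rule ann_zero)
    show kB: "k \<in> carrier M" using k KD(1) by blast
    fix z assume z: "z \<in> carrier M"
    show "mul k z = \<one>"
    proof (rule W_zero[OF I0])
      show "mul k z \<in> carrier M" using mul_closed kB z by blast
      fix g x assume g: "g \<in> carrier H" and x: "x \<in> I0"
      have gx: "act g x \<in> carrier M" using act_closed g x I0B by blast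
      have f1: "form (act g x) (mul k z) = form (mul (act g x) k) z"
        using form_assoc[OF gx kB z] by simp
      have "act g ` I0 \<noteq> K" using nt g by blast
      then have "mul (act g x) k = \<one>"
        using amin_distinct[OF act_amin[OF I0 g] K _ _ k] x by blast
      then show "\<not> form (act g x) (mul k z)" using f1 form_zero z by simp
    qed
  qed
  then have "K = {\<one>}" using KD(2) by blast
  then show False using K amin_def by blast
qed

lemma W'_zero:
  assumes y: "y \<in> carrier M" and orth: "\<And>K x. amin K \<Longrightarrow> x \<in> K \<Longrightarrow> \<not> form x y"
  shows "y = \<one>"
proof -
  obtain I0 where I0: "amin I0" using exists_amin by blast
  show ?thesis
  proof (rule W_zero[OF I0 y])
    fix g x assume "g \<in> carrier H" "x \<in> I0"
    then show "\<not> form (act g x) y" using orth[OF act_amin[OF I0]] by blast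
  qed
qed


lemma mul_finprod:
  assumes "finite A" "f \<in> A \<rightarrow> carrier M" "z \<in> carrier M"
  shows "mul (finprod M f A) z = finprod M (\<lambda>a. mul (f a) z) A"
  using assms
proof (induction A rule: finite_induct)
  case empty
  then show ?case using mul_zero by simp
next
  case (insert a F)
  have fa: "f a \<in> carrier M" and fF: "f \<in> F \<rightarrow> carrier M" using insert.prems by auto
  have "finprod M f (insert a F) = f a \<otimes> finprod M f F"
    using finprod_insert[OF insert.hyps fF fa] .
  then have "mul (finprod M f (insert a F)) z = mul (f a) z \<otimes> mul (finprod M f F) z"
    using mul_add fa finprod_closed[OF fF] insert.prems by simp
  also have "\<dots> = mul (f a) z \<otimes> finprod M (\<lambda>a. mul (f a) z) F"
    using insert.IH fF insert.prems by simp
  also have "\<dots> = finprod M (\<lambda>a. mul (f a) z) (insert a F)"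
    using finprod_insert[OF insert.hyps, of "\<lambda>a. mul (f a) z"] mul_closed fF fa insert.prems
    by (auto simp: Pi_def)
  finally show ?case .
qed

lemma act_finprod:
  assumes "finite A" "f \<in> A \<rightarrow> carrier M" "g \<in> carrier H"
  shows "act g (finprod M f A) = finprod M (\<lambda>a. act g (f a)) A"
  using assms
proof (induction A rule: finite_induct)
  case empty
  then show ?case using act_zero by simp
next
  case (insert a F)
  have fa: "f a \<in> carrier M" and fF: "f \<in> F \<rightarrow> carrier M" using insert.prems by auto
  have "finprod M f (insert a F) = f a \<otimes> finprod M f F"
    using finprod_insert[OF insert.hyps fF fa] .
  then have "act g (finprod M f (insert a F)) = act g (f a) \<otimes> act g (finprod M f F)"
    using act_add fa finprod_closed[OF fF] insert.prems by simp
  also have "\<dots> = act g (f a) \<otimes> finprod M (\<lambda>a. act g (f a)) F"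
    using insert.IH fF insert.prems by simp
  also have "\<dots> = finprod M (\<lambda>a. act g (f a)) (insert a F)"
    using finprod_insert[OF insert.hyps, of "\<lambda>a. act g (f a)"] act_closed fF fa insert.prems
    by (auto simp: Pi_def)
  finally show ?case .
qed

definition Mins :: "'e set set" where "Mins = {J. amin J}"

lemma Mins_finite: "finite Mins"
proof -
  have "Mins \<subseteq> Pow (carrier M)" unfolding Mins_def amin_def using aidealD(1) by blast
  moreover have "finite (Pow (carrier M))" using fin by simp
  ultimately show ?thesis by (rule finite_subset)
qed

lemma Mins_sub: "J \<in> Mins \<Longrightarrow> J \<subseteq> carrier M"
  unfolding Mins_def amin_def using aidealD(1) by blast

lemma PiE_carr: "f \<in> (\<Pi>\<^sub>E I \<in> Mins. I) \<Longrightarrow> f \<in> Mins \<rightarrow> carrier M"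
proof
  fix J assume f: "f \<in> (\<Pi>\<^sub>E I \<in> Mins. I)" and J: "J \<in> Mins"
  then have "f J \<in> J" by (rule PiE_mem)
  then show "f J \<in> carrier M" using Mins_sub[OF J] by blast
qed

lemma single_term:
  assumes J: "J \<in> Mins" and h: "h \<in> Mins \<rightarrow> carrier M" and z: "\<And>K. K \<in> Mins \<Longrightarrow> K \<noteq> J \<Longrightarrow> h K = \<one>"
  shows "finprod M h Mins = h J"
proof -
  have "finprod M h Mins = finprod M (\<lambda>K. if K = J then h K else \<one>) Mins"
    by (rule finprod_cong') (use h z in auto)
  also have "\<dots> = h J" using finprod_singleton_swap[OF J Mins_finite h] .
  finally show ?thesis .
qed

lemma uniq:
  assumes f: "f \<in> (\<Pi>\<^sub>E I \<in> Mins. I)" and f': "f' \<in> (\<Pi>\<^sub>E I \<in> Mins. I)"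
    and eq: "finprod M f Mins = finprod M f' Mins"
  shows "f = f'"
proof -
  have fc: "f \<in> Mins \<rightarrow> carrier M" and fc': "f' \<in> Mins \<rightarrow> carrier M" using PiE_carr f f' by auto
  define h where "h = (\<lambda>K. f K \<otimes> f' K)"
  have hc: "h \<in> Mins \<rightarrow> carrier M" using fc fc' unfolding h_def by auto
  have hK: "h K \<in> K" if "K \<in> Mins" for K
  proof -
    have "aideal K" using that Mins_def amin_def by blast
    moreover have "f K \<in> K" "f' K \<in> K" using PiE_mem[OF f that] PiE_mem[OF f' that] by auto
    ultimately show ?thesis unfolding h_def using aidealD(3) by blast
  qed
  have hs: "finprod M h Mins = \<one>"
  proof -
    have "finprod M h Mins = finprod M f Mins \<otimes> finprod M f' Mins"
      unfolding h_def using finprod_multf[OF fc fc'] .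
    then show ?thesis using eq selfinv finprod_closed fc' by simp
  qed
  have hz: "h J = \<one>" if J: "J \<in> Mins" for J
  proof -
    have Jm: "amin J" using J Mins_def by blast
    have Jid: "aideal J" using Jm amin_def by blast
    note JD = aidealD[OF Jid]
    define N where "N = {x \<in> J. \<forall>y\<in>J. \<forall>z\<in>carrier M. \<not> form x (mul y z)}"
    have Nid: "aideal N"
    proof (rule aidealI)
      show "N \<subseteq> carrier M" using JD(1) N_def by blast
      show "\<one> \<in> N" unfolding N_def using JD(2) form_zero mul_closed JD(1) by blast
      show "P \<otimes> Q \<in> N" if PQ: "P \<in> N" "Q \<in> N" for P Q
      proof -
        have "\<not> form (P \<otimes> Q) (mul y z)" if "y \<in> J" "z \<in> carrier M" for y z
          using PQ that form_add[of P Q "mul y z"] mul_closed JD(1) unfolding N_def by blast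
        then show ?thesis using PQ JD(3) unfolding N_def by blast
      qed
      show "mul P Q \<in> N" if PQ: "P \<in> N" "Q \<in> carrier M" for P Q
      proof -
        have PJ: "P \<in> J" using PQ N_def by blast
        have PB: "P \<in> carrier M" using PJ JD(1) by blast
        have "\<not> form (mul P Q) (mul y z)" if yz: "y \<in> J" "z \<in> carrier M" for y z
        proof -
          have yB: "y \<in> carrier M" using yz JD(1) by blast
          have yzB: "mul y z \<in> carrier M" using mul_closed yB yz by blast
          have "form (mul P Q) (mul y z) = form P (mul Q (mul y z))"
            using form_assoc[OF PB PQ(2) yzB] .
          also have "mul Q (mul y z) = mul (mul y z) Q" using mul_comm[OF PQ(2) yzB] .
          finally have "form (mul P Q) (mul y z) = form P (mul (mul y z) Q)" .
          moreover have "mul y z \<in> J" using JD(4) yz by blast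
          ultimately show ?thesis using PQ N_def by blast
        qed
        then show ?thesis using JD(4)[OF PJ PQ(2)] unfolding N_def by blast
      qed
    qed
    have hN: "h J \<in> N"
    proof -
      have hJB: "h J \<in> carrier M" using hc J by blast
      have "\<not> form (h J) (mul y z)" if yz: "y \<in> J" "z \<in> carrier M" for y z
      proof -
        have yB: "y \<in> carrier M" using yz JD(1) by blast
        have "mul (finprod M h Mins) y = finprod M (\<lambda>K. mul (h K) y) Mins"
          using mul_finprod[OF Mins_finite hc yB] .
        also have "\<dots> = mul (h J) y"
        proof (rule single_term[OF J])
          show "(\<lambda>K. mul (h K) y) \<in> Mins \<rightarrow> carrier M" using hc mul_closed yB by auto
          fix K assume K: "K \<in> Mins" "K \<noteq> J"
          show "mul (h K) y = \<one>"
          proof -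
            have "amin K" using K(1) unfolding Mins_def by simp
            then show ?thesis using amin_distinct[OF _ Jm K(2) hK[OF K(1)] yz(1)] by blast
          qed
        qed
        finally have "mul (h J) y = \<one>" using hs mul_zero yB by simp
        then show ?thesis using form_assoc[OF hJB yB yz(2)] form_zero yz by simp
      qed
      then show ?thesis using hK[OF J] unfolding N_def by blast
    qed
    have "N \<subseteq> J" unfolding N_def by blast
    then have "N = {\<one>} \<or> N = J" using Jm Nid amin_def by blast
    moreover have "N \<noteq> J"
    proof
      assume NJ: "N = J"
      have "y = \<one>" if y: "y \<in> J" for y
      proof (rule ann_zero)
        show yB: "y \<in> carrier M" using y JD(1) by blast
        fix z assume z: "z \<in> carrier M"
        show "mul y z = \<one>"
        proof (rule W'_zero)
          show "mul y z \<in> carrier M" using mul_closed yB z by blast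
          fix K x assume K: "amin K" and x: "x \<in> K"
          show "\<not> form x (mul y z)"
          proof (cases "K = J")
            case True
            then show ?thesis using NJ x y z unfolding N_def by blast
          next
            case False
            have xB: "x \<in> carrier M" using K x amin_def aidealD(1) by blast
            have "mul x y = \<one>" using amin_distinct[OF K Jm False x y] .
            then show ?thesis using form_assoc[OF xB yB z] form_zero z by simp
          qed
        qed
      qed
      then have "J = {\<one>}" using JD(2) by blast
      then show False using Jm amin_def by blast
    qed
    ultimately show ?thesis using hN by blast
  qed
  show "f = f'"
  proof (rule PiE_ext[OF f f'])
    fix J assume J: "J \<in> Mins"
    have a: "f J \<in> carrier M" "f' J \<in> carrier M" using fc fc' J by auto
    have "f J = (f J \<otimes> f' J) \<otimes> f' J" using a m_assoc selfinv by simp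
    also have "\<dots> = f' J" using hz[OF J] a unfolding h_def by simp
    finally show "f J = f' J" .
  qed
qed


lemma restrict_in:
  assumes "\<And>J. J \<in> Mins \<Longrightarrow> F J \<in> J"
  shows "(\<lambda>J\<in>Mins. F J) \<in> (\<Pi>\<^sub>E I \<in> Mins. I)"
  using assms by (simp add: restrict_PiE_iff)

lemma finprod_restrict:
  assumes "F \<in> Mins \<rightarrow> carrier M"
  shows "finprod M (\<lambda>J\<in>Mins. F J) Mins = finprod M F Mins"
  by (rule finprod_cong') (use assms in auto)

lemma Mins_aideal: "J \<in> Mins \<Longrightarrow> aideal J"
  unfolding Mins_def amin_def by blast

definition Tset where "Tset = {finprod M f Mins | f. f \<in> (\<Pi>\<^sub>E I \<in> Mins. I)}"

lemma Tin: "F \<in> (\<Pi>\<^sub>E I \<in> Mins. I) \<Longrightarrow> finprod M F Mins = y \<Longrightarrow> y \<in> Tset"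
  unfolding Tset_def mem_Collect_eq by (rule exI[of _ F]) simp

lemma Tset_ideal: "aideal Tset"
proof -
  define T where "T = Tset"
  have Tin: "y \<in> T" if "F \<in> (\<Pi>\<^sub>E I \<in> Mins. I)" "finprod M F Mins = y" for F y
    using Tin that unfolding T_def by blast
  have T_def': "T = {finprod M f Mins | f. f \<in> (\<Pi>\<^sub>E I \<in> Mins. I)}" unfolding T_def Tset_def ..
  have Tid: "aideal T"
  proof (rule aidealI)
    show "T \<subseteq> carrier M"
    proof
      fix P assume "P \<in> T"
      then obtain f where f: "f \<in> (\<Pi>\<^sub>E I \<in> Mins. I)" "P = finprod M f Mins" unfolding T_def' by blast
      show "P \<in> carrier M" using f(2) finprod_closed[OF PiE_carr[OF f(1)]] by simp
    qed
    have r1: "(\<lambda>J\<in>Mins. \<one>) \<in> (\<Pi>\<^sub>E I \<in> Mins. I)"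
    proof (rule restrict_in)
      fix J assume J: "J \<in> Mins"
      show "\<one> \<in> J" using aidealD(2)[OF Mins_aideal[OF J]] .
    qed
    have r2: "finprod M (\<lambda>J\<in>Mins. \<one>) Mins = \<one>"
      by (rule finprod_one_eqI) simp
    show "\<one> \<in> T" unfolding T_def' mem_Collect_eq
      by (rule exI[where x = "\<lambda>J\<in>Mins. \<one>"]) (use r1 r2 in simp)
    show "P \<otimes> Q \<in> T" if PQ: "P \<in> T" "Q \<in> T" for P Q
    proof -
      obtain f f' where f: "f \<in> (\<Pi>\<^sub>E I \<in> Mins. I)" "P = finprod M f Mins"
        and f': "f' \<in> (\<Pi>\<^sub>E I \<in> Mins. I)" "Q = finprod M f' Mins" using PQ unfolding T_def' by blast
      have fc: "f \<in> Mins \<rightarrow> carrier M" "f' \<in> Mins \<rightarrow> carrier M" using PiE_carr f f' by auto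
      have "(\<lambda>J\<in>Mins. f J \<otimes> f' J) \<in> (\<Pi>\<^sub>E I \<in> Mins. I)"
      proof (rule restrict_in)
        fix J assume J: "J \<in> Mins"
        show "f J \<otimes> f' J \<in> J" using aidealD(3)[OF Mins_aideal[OF J] PiE_mem[OF f(1) J] PiE_mem[OF f'(1) J]] .
      qed
      moreover have "finprod M (\<lambda>J\<in>Mins. f J \<otimes> f' J) Mins = P \<otimes> Q"
      proof -
        have "finprod M (\<lambda>J\<in>Mins. f J \<otimes> f' J) Mins = finprod M (\<lambda>J. f J \<otimes> f' J) Mins"
          by (rule finprod_restrict) (use fc in auto)
        also have "\<dots> = P \<otimes> Q" using finprod_multf[OF fc] f f' by simp
        finally show ?thesis .
      qed
      ultimately show ?thesis by (rule Tin)
    qed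
    show "mul P Q \<in> T" if PQ: "P \<in> T" "Q \<in> carrier M" for P Q
    proof -
      obtain f where f: "f \<in> (\<Pi>\<^sub>E I \<in> Mins. I)" "P = finprod M f Mins" using PQ unfolding T_def' by blast
      have fc: "f \<in> Mins \<rightarrow> carrier M" using PiE_carr f by auto
      have "(\<lambda>J\<in>Mins. mul (f J) Q) \<in> (\<Pi>\<^sub>E I \<in> Mins. I)"
      proof (rule restrict_in)
        fix J assume J: "J \<in> Mins"
        show "mul (f J) Q \<in> J" using aidealD(4)[OF Mins_aideal[OF J] PiE_mem[OF f(1) J] PQ(2)] .
      qed
      moreover have "finprod M (\<lambda>J\<in>Mins. mul (f J) Q) Mins = mul P Q"
      proof -
        have "finprod M (\<lambda>J\<in>Mins. mul (f J) Q) Mins = finprod M (\<lambda>J. mul (f J) Q) Mins"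
          by (rule finprod_restrict) (use fc mul_closed PQ in auto)
        also have "\<dots> = mul P Q" using mul_finprod[OF Mins_finite fc PQ(2)] f by simp
        finally show ?thesis .
      qed
      ultimately show ?thesis by (rule Tin)
    qed
  qed
  then show ?thesis unfolding T_def .
qed

lemma Tset_inv:
  assumes g: "g \<in> carrier H" and P: "P \<in> Tset"
  shows "act g P \<in> Tset"
proof -
      obtain f where f: "f \<in> (\<Pi>\<^sub>E I \<in> Mins. I)" "P = finprod M f Mins" using P unfolding Tset_def by blast
      have fc: "f \<in> Mins \<rightarrow> carrier M" using PiE_carr f by auto
      define phi where "phi = (\<lambda>K. act g ` K)"
      define psi where "psi = (\<lambda>K. act (inv\<^bsub>H\<^esub> g) ` K)"
      have ig: "inv\<^bsub>H\<^esub> g \<in> carrier H" using inv_closedH g .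
      have phiM: "phi K \<in> Mins" if K: "K \<in> Mins" for K
      proof -
        have "amin K" using K unfolding Mins_def by simp
        then have "amin (act g ` K)" by (rule act_amin[OF _ g])
        then show ?thesis unfolding phi_def Mins_def by simp
      qed
      have psiM: "psi K \<in> Mins" if K: "K \<in> Mins" for K
      proof -
        have "amin K" using K unfolding Mins_def by simp
        then have "amin (act (inv\<^bsub>H\<^esub> g) ` K)" by (rule act_amin[OF _ ig])
        then show ?thesis unfolding psi_def Mins_def by simp
      qed
      have pp: "phi (psi K) = K" if "K \<in> Mins" for K
        unfolding phi_def psi_def using act_img_inv[OF g Mins_sub[OF that]] .
      have pp2: "psi (phi K) = K" if "K \<in> Mins" for K
        unfolding phi_def psi_def using act_img_inv1[OF g Mins_sub[OF that]] .
      have img: "phi ` Mins = Mins"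
      proof
        show "phi ` Mins \<subseteq> Mins" using phiM by blast
        show "Mins \<subseteq> phi ` Mins"
        proof
          fix K assume K: "K \<in> Mins"
          then have "K = phi (psi K)" using pp by simp
          then show "K \<in> phi ` Mins" using psiM[OF K] by blast
        qed
      qed
      have inj: "inj_on phi Mins"
      proof (rule inj_onI)
        fix K K' assume "K \<in> Mins" "K' \<in> Mins" "phi K = phi K'"
        then show "K = K'" using pp2 by metis
      qed
      define f' where "f' = (\<lambda>K\<in>Mins. act g (f (psi K)))"
      have f'P: "f' \<in> (\<Pi>\<^sub>E I \<in> Mins. I)"
        unfolding f'_def
      proof (rule restrict_in)
        fix K assume K: "K \<in> Mins"
        have "f (psi K) \<in> psi K" using PiE_mem[OF f(1) psiM[OF K]] .
        then have "act g (f (psi K)) \<in> phi (psi K)" unfolding phi_def by blast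
        then show "act g (f (psi K)) \<in> K" using pp[OF K] by simp
      qed
      have f'c: "f' \<in> Mins \<rightarrow> carrier M" using PiE_carr[OF f'P] .
      have "finprod M f' Mins = finprod M f' (phi ` Mins)" using img by simp
      also have "\<dots> = finprod M (\<lambda>K. f' (phi K)) Mins"
      proof (rule finprod_reindex)
        show "f' \<in> phi ` Mins \<rightarrow> carrier M" using f'c img by simp
        show "inj_on phi Mins" by (rule inj)
      qed
      also have "\<dots> = finprod M (\<lambda>K. act g (f K)) Mins"
      proof (rule finprod_cong')
        show "(\<lambda>K. act g (f K)) \<in> Mins \<rightarrow> carrier M" using fc act_closed g by auto
        fix K assume K: "K \<in> Mins"
        show "f' (phi K) = act g (f K)" unfolding f'_def using phiM[OF K] pp2[OF K] by simp
      qed (rule refl)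
      also have "\<dots> = act g P" using act_finprod[OF Mins_finite fc g] f by simp
      finally show "act g P \<in> Tset" by (rule Tin[OF f'P])
qed

lemma exist:
  assumes x: "x \<in> carrier M"
  shows "\<exists>f. f \<in> (\<Pi>\<^sub>E I \<in> Mins. I) \<and> finprod M f Mins = x"
proof -
  have "Tset = carrier M"
  proof -
    obtain I0 where I0: "amin I0" using exists_amin by blast
    then have I0M: "I0 \<in> Mins" unfolding Mins_def by simp
    have "I0 \<noteq> {\<one>}" "\<one> \<in> I0" using I0 aidealD(2) unfolding amin_def by auto
    then obtain x0 where x0: "x0 \<in> I0" "x0 \<noteq> \<one>" by blast
    have x0B: "x0 \<in> carrier M" using x0 Mins_sub[OF I0M] by blast
    show ?thesis
    proof (rule invariant_full[OF Tset_ideal Tset_inv])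
      define f where "f = (\<lambda>J\<in>Mins. if J = I0 then x0 else \<one>)"
      have f: "f \<in> (\<Pi>\<^sub>E I \<in> Mins. I)"
        unfolding f_def
      proof (rule restrict_in)
        fix J assume J: "J \<in> Mins"
        show "(if J = I0 then x0 else \<one>) \<in> J" using aidealD(2)[OF Mins_aideal[OF J]] x0 by simp
      qed
      have "finprod M f Mins = f I0"
        by (rule single_term[OF I0M PiE_carr[OF f]]) (simp add: f_def)
      then have "finprod M f Mins = x0" using I0M by (simp add: f_def)
      then show "x0 \<in> Tset" by (rule Tin[OF f])
      show "x0 \<noteq> \<one>" by fact
    qed
  qed
  then have "x \<in> Tset" using x by simp
  then show ?thesis unfolding Tset_def by auto
qed

theorem abs_main:
  "(\<forall>x \<in> carrier M. \<exists>!f. f \<in> (\<Pi>\<^sub>E I \<in> {J. amin J}. I) \<and> finprod M f {J. amin J} = x)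
   \<and> (\<forall>I J. amin I \<and> amin J \<and> I \<noteq> J \<longrightarrow> (\<forall>x \<in> I. \<forall>y \<in> J. mul x y = \<one>))
   \<and> (\<forall>I J. amin I \<and> amin J \<longrightarrow> (\<exists>g \<in> carrier H. act g ` I = J))"
proof (intro conjI allI impI ballI)
  fix x assume x: "x \<in> carrier M"
  show "\<exists>!f. f \<in> (\<Pi>\<^sub>E I \<in> {J. amin J}. I) \<and> finprod M f {J. amin J} = x"
    using exist[OF x] uniq unfolding Mins_def by metis
next
  fix I J x y assume "amin I \<and> amin J \<and> I \<noteq> J" "x \<in> I" "y \<in> J"
  then show "mul x y = \<one>" using amin_distinct by blast
next
  fix I J assume IJ: "amin I \<and> amin J"
  obtain I0 where I0: "amin I0" using exists_amin by blast
  obtain g1 where g1: "g1 \<in> carrier H" "act g1 ` I0 = I" using amin_trans[OF I0] IJ by blast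
  obtain g2 where g2: "g2 \<in> carrier H" "act g2 ` I0 = J" using amin_trans[OF I0] IJ by blast
  have I0B: "I0 \<subseteq> carrier M" using I0 amin_def aidealD(1) by blast
  have ig: "inv\<^bsub>H\<^esub> g1 \<in> carrier H" using inv_closedH g1(1) .
  have gg: "inv\<^bsub>H\<^esub> g1 \<otimes>\<^bsub>H\<^esub> g2 \<in> carrier H" using mulH_closed[OF ig g2(1)] .
  have "act (inv\<^bsub>H\<^esub> g1 \<otimes>\<^bsub>H\<^esub> g2) ` I = act g2 ` act (inv\<^bsub>H\<^esub> g1) ` I"
  proof -
    have IB: "I \<subseteq> carrier M" using IJ amin_def aidealD(1) by blast
    have "(\<lambda>x. act (inv\<^bsub>H\<^esub> g1 \<otimes>\<^bsub>H\<^esub> g2) x) ` I = (\<lambda>x. act g2 (act (inv\<^bsub>H\<^esub> g1) x)) ` I"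
      by (rule image_cong) (use act_comp[OF ig g2(1)] IB in auto)
    then show ?thesis by (simp add: image_image)
  qed
  also have "\<dots> = act g2 ` I0" using act_img_inv1[OF g1(1) I0B] g1(2) by simp
  finally show "\<exists>g \<in> carrier H. act g ` I = J" using gg g2(2) by blast
qed

end



lemma sdiff_iff [simp]: "x \<in> sdiff X Y \<longleftrightarrow> (x \<in> X) \<noteq> (x \<in> Y)"
  unfolding sdiff_def by blast

definition qform :: "('a, 'b) monoid_scheme \<Rightarrow> 'a set set \<Rightarrow> 'a set set \<Rightarrow> bool" where
  "qform G P Q = bform G (SOME X. X \<in> P) (SOME Y. Y \<in> Q)"

locale conc = group G for G :: "('a, 'b) monoid_scheme" (structure) +
  fixes D :: "'a set"
  assumes tt: "three_transp G D" and finD: "finite D"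
begin

lemma Dsub: "D \<subseteq> carrier G"
  using tt unfolding three_transp_def by blast

lemma Dc: "d \<in> D \<Longrightarrow> d \<in> carrier G"
  using Dsub by blast

lemma invol: "d \<in> D \<Longrightarrow> d \<otimes> d = \<one>"
  using tt unfolding three_transp_def by blast

lemma invD: "d \<in> D \<Longrightarrow> inv d = d"
  using inv_equality[of d d] invol Dc by blast

lemma ordD: "d \<in> D \<Longrightarrow> e \<in> D \<Longrightarrow> ord (d \<otimes> e) \<in> {1, 2, 3}"
  using tt unfolding three_transp_def by blast

lemma conjg_eq: "conjg G d g = inv g \<otimes> d \<otimes> g"
  by (simp add: conjg_def)

lemma conj_closed: "x \<in> carrier G \<Longrightarrow> g \<in> carrier G \<Longrightarrow> conjg G x g \<in> carrier G"
  by (simp add: conjg_eq)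

lemma conj_comp: "x \<in> carrier G \<Longrightarrow> g \<in> carrier G \<Longrightarrow> h \<in> carrier G \<Longrightarrow>
   conjg G (conjg G x g) h = conjg G x (g \<otimes> h)"
  by (simp add: conjg_eq inv_mult_group m_assoc)

lemma conj_one: "x \<in> carrier G \<Longrightarrow> conjg G x \<one> = x"
  by (simp add: conjg_eq)

lemma cancel1: "g \<in> carrier G \<Longrightarrow> z \<in> carrier G \<Longrightarrow> g \<otimes> (inv g \<otimes> z) = z"
  by (metis inv_closed m_assoc r_inv l_one)

lemma cancel2: "g \<in> carrier G \<Longrightarrow> z \<in> carrier G \<Longrightarrow> inv g \<otimes> (g \<otimes> z) = z"
  by (metis inv_closed m_assoc l_inv l_one)

lemma conj_mult: "x \<in> carrier G \<Longrightarrow> y \<in> carrier G \<Longrightarrow> g \<in> carrier G \<Longrightarrow>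
   conjg G (x \<otimes> y) g = conjg G x g \<otimes> conjg G y g"
proof -
  assume a: "x \<in> carrier G" "y \<in> carrier G" "g \<in> carrier G"
  have "conjg G x g \<otimes> conjg G y g = inv g \<otimes> (x \<otimes> (g \<otimes> (inv g \<otimes> (y \<otimes> g))))"
    using a by (simp add: conjg_eq m_assoc)
  also have "\<dots> = inv g \<otimes> (x \<otimes> (y \<otimes> g))" using a cancel1[of g "y \<otimes> g"] by simp
  finally show ?thesis using a by (simp add: conjg_eq m_assoc)
qed

lemma conj_inv: "x \<in> carrier G \<Longrightarrow> g \<in> carrier G \<Longrightarrow> conjg G (conjg G x g) (inv g) = x"
  by (simp add: conj_comp conj_one)

lemma conj_inv2: "x \<in> carrier G \<Longrightarrow> g \<in> carrier G \<Longrightarrow> conjg G (conjg G x (inv g)) g = x"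
  by (simp add: conj_comp conj_one)

lemma conj_inj: "x \<in> carrier G \<Longrightarrow> y \<in> carrier G \<Longrightarrow> g \<in> carrier G \<Longrightarrow>
   conjg G x g = conjg G y g \<Longrightarrow> x = y"
proof -
  assume a: "x \<in> carrier G" "y \<in> carrier G" "g \<in> carrier G" "conjg G x g = conjg G y g"
  have "x = conjg G (conjg G x g) (inv g)" using conj_inv[OF a(1) a(3)] by (rule sym)
  also have "\<dots> = conjg G (conjg G y g) (inv g)" using a(4) by simp
  also have "\<dots> = y" using conj_inv[OF a(2) a(3)] .
  finally show "x = y" .
qed

lemma conj_D: "d \<in> D \<Longrightarrow> g \<in> carrier G \<Longrightarrow> conjg G d g \<in> D"
proof -
  assume d: "d \<in> D" and g: "g \<in> carrier G"
  obtain d0 where d0: "d0 \<in> carrier G" "D = {inv h \<otimes> d0 \<otimes> h | h. h \<in> carrier G}"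
    using tt unfolding three_transp_def by blast
  then obtain h where h: "h \<in> carrier G" "d = conjg G d0 h" using d by (auto simp: conjg_eq)
  then have "conjg G d g = conjg G d0 (h \<otimes> g)" using conj_comp d0 g by simp
  then show ?thesis using d0 h g by (auto simp: conjg_eq)
qed

lemma D_trans: "d \<in> D \<Longrightarrow> e \<in> D \<Longrightarrow> \<exists>g\<in>carrier G. conjg G d g = e"
proof -
  assume d: "d \<in> D" and e: "e \<in> D"
  obtain d0 where d0: "d0 \<in> carrier G" "D = {inv h \<otimes> d0 \<otimes> h | h. h \<in> carrier G}"
    using tt unfolding three_transp_def by blast
  then obtain h where h: "h \<in> carrier G" "d = conjg G d0 h" using d by (auto simp: conjg_eq)
  obtain k where k: "k \<in> carrier G" "e = conjg G d0 k" using d0 e by (auto simp: conjg_eq)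
  have ih: "inv h \<in> carrier G" using h(1) by simp
  have "conjg G d (inv h \<otimes> k) = conjg G (conjg G d (inv h)) k" using conj_comp[OF Dc[OF d] ih k(1)] by simp
  also have "conjg G d (inv h) = d0" unfolding h(2) using conj_inv[OF d0(1) h(1)] .
  finally have "conjg G d (inv h \<otimes> k) = e" using k(2) by simp
  moreover have "inv h \<otimes> k \<in> carrier G" using ih k(1) by simp
  ultimately show ?thesis by blast
qed

lemma comm_conj: "a \<in> carrier G \<Longrightarrow> b \<in> carrier G \<Longrightarrow> g \<in> carrier G \<Longrightarrow>
   commutes G (conjg G a g) (conjg G b g) \<longleftrightarrow> commutes G a b"
proof -
  assume a: "a \<in> carrier G" "b \<in> carrier G" "g \<in> carrier G"
  have "conjg G a g \<otimes> conjg G b g = conjg G (a \<otimes> b) g" using conj_mult a by simp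
  moreover have "conjg G b g \<otimes> conjg G a g = conjg G (b \<otimes> a) g" using conj_mult a by simp
  ultimately have "(conjg G a g \<otimes> conjg G b g = conjg G b g \<otimes> conjg G a g) \<longleftrightarrow> (a \<otimes> b = b \<otimes> a)"
    using conj_inj[of "a \<otimes> b" "b \<otimes> a" g] a by auto
  then show ?thesis unfolding commutes_def .
qed


lemma pow1: "x \<in> carrier G \<Longrightarrow> x [^] (1::nat) = x"
  by (simp add: numeral_eq_Suc)

lemma pow2: "x \<in> carrier G \<Longrightarrow> x [^] (2::nat) = x \<otimes> x"
  by (simp add: numeral_eq_Suc)

lemma pow3: "x \<in> carrier G \<Longrightarrow> x [^] (3::nat) = x \<otimes> x \<otimes> x"
  by (simp add: numeral_eq_Suc)

lemma braid:
  assumes d: "d \<in> D" and e: "e \<in> D" and nc: "\<not> commutes G d e"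
  shows "d \<otimes> e \<otimes> d = e \<otimes> d \<otimes> e"
proof -
  have dc: "d \<in> carrier G" and ec: "e \<in> carrier G" using Dc d e by auto
  let ?x = "d \<otimes> e"
  have xc: "?x \<in> carrier G" using dc ec by simp
  have px: "?x [^] ord ?x = \<one>" using pow_ord_eq_1[OF xc] .
  have "ord ?x \<in> {1, 2, 3}" using ordD d e .
  moreover have "ord ?x \<noteq> 1"
  proof
    assume "ord ?x = 1"
    then have "?x = \<one>" using px pow1[OF xc] by simp
    then have "inv e = d" using inv_equality[OF _ ec dc] by simp
    then have "d = e" using invD e by simp
    then show False using nc unfolding commutes_def by simp
  qed
  moreover have "ord ?x \<noteq> 2"
  proof
    assume "ord ?x = 2"
    then have "?x \<otimes> ?x = \<one>" using px pow2[OF xc] by simp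
    then have "inv ?x = ?x" using inv_equality[OF _ xc xc] by simp
    moreover have "inv ?x = e \<otimes> d" using inv_mult_group[OF dc ec] invD d e by simp
    ultimately show False using nc unfolding commutes_def by simp
  qed
  ultimately have "ord ?x = 3" by simp
  then have "?x \<otimes> ?x \<otimes> ?x = \<one>" using px pow3[OF xc] by simp
  then have "(d \<otimes> e \<otimes> d) \<otimes> (e \<otimes> d \<otimes> e) = \<one>" using dc ec by (simp add: m_assoc)
  then have "inv (e \<otimes> d \<otimes> e) = d \<otimes> e \<otimes> d" using inv_equality dc ec by simp
  moreover have "inv (e \<otimes> d \<otimes> e) = e \<otimes> d \<otimes> e"
    using inv_mult_group dc ec invD d e by (simp add: m_assoc)
  ultimately show ?thesis by simp
qed

lemma conjDD: "d \<in> D \<Longrightarrow> e \<in> D \<Longrightarrow> conjg G d e = e \<otimes> d \<otimes> e"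
  using invD by (simp add: conjg_eq)

lemma conj_sym: "d \<in> D \<Longrightarrow> e \<in> D \<Longrightarrow> \<not> commutes G d e \<Longrightarrow> conjg G d e = conjg G e d"
  using braid[of d e] conjDD[of d e] conjDD[of e d] by simp

lemma conj_commute: "d \<in> D \<Longrightarrow> e \<in> D \<Longrightarrow> commutes G d e \<Longrightarrow> conjg G d e = d"
proof -
  assume d: "d \<in> D" and e: "e \<in> D" and c: "commutes G d e"
  have dc: "d \<in> carrier G" and ec: "e \<in> carrier G" using Dc d e by auto
  have "e \<otimes> d \<otimes> e = d \<otimes> e \<otimes> e" using c unfolding commutes_def by simp
  also have "\<dots> = d" using invol[OF e] dc ec by (simp add: m_assoc)
  finally show ?thesis using conjDD d e by simp
qed

lemma commutes_sym: "commutes G a b \<longleftrightarrow> commutes G b a"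
  unfolding commutes_def by auto

lemma commutes_refl: "commutes G a a"
  unfolding commutes_def by auto

lemma nc_ne: "\<not> commutes G d e \<Longrightarrow> d \<noteq> e"
  using commutes_refl by auto

lemma conj_ne1: "d \<in> D \<Longrightarrow> e \<in> D \<Longrightarrow> \<not> commutes G d e \<Longrightarrow> conjg G d e \<noteq> d"
proof
  assume d: "d \<in> D" and e: "e \<in> D" and nc: "\<not> commutes G d e" and eq: "conjg G d e = d"
  have dc: "d \<in> carrier G" and ec: "e \<in> carrier G" using Dc d e by auto
  have "e \<otimes> d \<otimes> e = d" using eq conjDD d e by simp
  then have "e \<otimes> (e \<otimes> d \<otimes> e) = e \<otimes> d" by simp
  moreover have "e \<otimes> (e \<otimes> d \<otimes> e) = d \<otimes> e"
    using invol[OF e] dc ec by (simp add: m_assoc[symmetric])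
  ultimately show False using nc unfolding commutes_def by simp
qed

lemma conj_ne2: "d \<in> D \<Longrightarrow> e \<in> D \<Longrightarrow> \<not> commutes G d e \<Longrightarrow> conjg G d e \<noteq> e"
proof
  assume d: "d \<in> D" and e: "e \<in> D" and nc: "\<not> commutes G d e" and eq: "conjg G d e = e"
  have dc: "d \<in> carrier G" and ec: "e \<in> carrier G" using Dc d e by auto
  have "e \<otimes> d \<otimes> e = e" using eq conjDD d e by simp
  then have "(e \<otimes> d \<otimes> e) \<otimes> e = e \<otimes> e" by simp
  then have "e \<otimes> d = \<one>" using invol[OF e] dc ec by (simp add: m_assoc)
  then have "inv d = e" using inv_equality[OF _ dc ec] by simp
  then have "d = e" using invD d by simp
  then show False using nc commutes_refl by simp
qed

lemma conj_back: "d \<in> D \<Longrightarrow> e \<in> D \<Longrightarrow> \<not> commutes G d e \<Longrightarrow> conjg G (conjg G e d) e = d"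
proof -
  assume d: "d \<in> D" and e: "e \<in> D" and nc: "\<not> commutes G d e"
  have dc: "d \<in> carrier G" and ec: "e \<in> carrier G" using Dc d e by auto
  have "conjg G e d = e \<otimes> d \<otimes> e" using conj_sym[OF d e nc] conjDD[OF d e] by simp
  moreover have "e \<otimes> d \<otimes> e \<in> D" using conjDD[OF d e] conj_D[OF d ec] by simp
  ultimately have "conjg G (conjg G e d) e = e \<otimes> (e \<otimes> d \<otimes> e) \<otimes> e" using conjDD e by simp
  also have "\<dots> = (e \<otimes> e) \<otimes> d \<otimes> (e \<otimes> e)" using dc ec by (simp add: m_assoc)
  also have "\<dots> = d" using invol[OF e] dc by simp
  finally show ?thesis .
qed


section \<open>Parity and bilinearity\<close>

lemma card_sdiff_odd:
  assumes "finite S" "finite T"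
  shows "odd (card (sdiff S T)) \<longleftrightarrow> (odd (card S) \<noteq> odd (card T))"
proof -
  have e: "sdiff S T = (S - T) \<union> (T - S)" unfolding sdiff_def ..
  have c1: "card (sdiff S T) = card (S - T) + card (T - S)"
    unfolding e by (rule card_Un_disjoint) (use assms in auto)
  have c2: "card S = card (S - T) + card (S \<inter> T)"
  proof -
    have "S = (S - T) \<union> (S \<inter> T)" by blast
    then have "card S = card ((S - T) \<union> (S \<inter> T))" by simp
    also have "\<dots> = card (S - T) + card (S \<inter> T)" by (rule card_Un_disjoint) (use assms in auto)
    finally show ?thesis .
  qed
  have c3: "card T = card (T - S) + card (S \<inter> T)"
  proof -
    have "T = (T - S) \<union> (S \<inter> T)" by blast
    then have "card T = card ((T - S) \<union> (S \<inter> T))" by simp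
    also have "\<dots> = card (T - S) + card (S \<inter> T)" by (rule card_Un_disjoint) (use assms in auto)
    finally show ?thesis .
  qed
  show ?thesis using c1 c2 c3 by presburger
qed

lemma par_lin1:
  assumes "finite X" "finite X'" "finite Y"
  shows "odd (card {(d, e). d \<in> sdiff X X' \<and> e \<in> Y \<and> R d e}) \<longleftrightarrow>
    (odd (card {(d, e). d \<in> X \<and> e \<in> Y \<and> R d e}) \<noteq> odd (card {(d, e). d \<in> X' \<and> e \<in> Y \<and> R d e}))"
proof -
  have eq: "{(d, e). d \<in> sdiff X X' \<and> e \<in> Y \<and> R d e} =
     sdiff {(d, e). d \<in> X \<and> e \<in> Y \<and> R d e} {(d, e). d \<in> X' \<and> e \<in> Y \<and> R d e}"
    by (auto simp: sdiff_def)
  have f1: "finite {(d, e). d \<in> X \<and> e \<in> Y \<and> R d e}"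
    by (rule finite_subset[of _ "X \<times> Y"]) (use assms in auto)
  have f2: "finite {(d, e). d \<in> X' \<and> e \<in> Y \<and> R d e}"
    by (rule finite_subset[of _ "X' \<times> Y"]) (use assms in auto)
  show ?thesis unfolding eq using card_sdiff_odd[OF f1 f2] .
qed

lemma par_lin2:
  assumes "finite X" "finite Y" "finite Y'"
  shows "odd (card {(d, e). d \<in> X \<and> e \<in> sdiff Y Y' \<and> R d e}) \<longleftrightarrow>
    (odd (card {(d, e). d \<in> X \<and> e \<in> Y \<and> R d e}) \<noteq> odd (card {(d, e). d \<in> X \<and> e \<in> Y' \<and> R d e}))"
proof -
  have eq: "{(d, e). d \<in> X \<and> e \<in> sdiff Y Y' \<and> R d e} =
     sdiff {(d, e). d \<in> X \<and> e \<in> Y \<and> R d e} {(d, e). d \<in> X \<and> e \<in> Y' \<and> R d e}"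
    by (auto simp: sdiff_def)
  have f1: "finite {(d, e). d \<in> X \<and> e \<in> Y \<and> R d e}"
    by (rule finite_subset[of _ "X \<times> Y"]) (use assms in auto)
  have f2: "finite {(d, e). d \<in> X \<and> e \<in> Y' \<and> R d e}"
    by (rule finite_subset[of _ "X \<times> Y'"]) (use assms in auto)
  show ?thesis unfolding eq using card_sdiff_odd[OF f1 f2] .
qed

lemma bform_lin1: "finite X \<Longrightarrow> finite X' \<Longrightarrow> finite Y \<Longrightarrow>
  bform G (sdiff X X') Y \<longleftrightarrow> (bform G X Y \<noteq> bform G X' Y)"
  unfolding bform_def by (rule par_lin1)

lemma bform_lin2: "finite X \<Longrightarrow> finite Y \<Longrightarrow> finite Y' \<Longrightarrow>
  bform G X (sdiff Y Y') \<longleftrightarrow> (bform G X Y \<noteq> bform G X Y')"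
  unfolding bform_def by (rule par_lin2)

lemma amul_lin1: assumes a: "finite X" "finite X'" "finite Y"
  shows "amul G (sdiff X X') Y = sdiff (amul G X Y) (amul G X' Y)"
proof (rule Set.set_eqI)
  fix f
  show "f \<in> amul G (sdiff X X') Y \<longleftrightarrow> f \<in> sdiff (amul G X Y) (amul G X' Y)"
    unfolding sdiff_iff[of f] unfolding amul_def mem_Collect_eq
    using par_lin1[OF a, of "\<lambda>d e. f \<in> bmul G d e"] by simp
qed

lemma amul_lin2: assumes a: "finite X" "finite Y" "finite Y'"
  shows "amul G X (sdiff Y Y') = sdiff (amul G X Y) (amul G X Y')"
proof (rule Set.set_eqI)
  fix f
  show "f \<in> amul G X (sdiff Y Y') \<longleftrightarrow> f \<in> sdiff (amul G X Y) (amul G X Y')"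
    unfolding sdiff_iff[of f] unfolding amul_def mem_Collect_eq
    using par_lin2[OF a, of "\<lambda>d e. f \<in> bmul G d e"] by simp
qed

lemma bform_empty1: "\<not> bform G {} Y"
  unfolding bform_def by simp

lemma bform_empty2: "\<not> bform G X {}"
  unfolding bform_def by simp

lemma amul_empty1: "amul G {} Y = {}"
  unfolding amul_def by simp

lemma amul_empty2: "amul G X {} = {}"
  unfolding amul_def by simp

lemma bform_single: "bform G {d} {e} \<longleftrightarrow> \<not> commutes G d e"
proof -
  have "{(x, y). x \<in> {d} \<and> y \<in> {e} \<and> \<not> commutes G x y} = (if commutes G d e then {} else {(d, e)})"
    by auto
  then show ?thesis unfolding bform_def by simp
qed

lemma amul_single: "amul G {d} {e} = bmul G d e"
proof -
  have "{(x, y). x \<in> {d} \<and> y \<in> {e} \<and> f \<in> bmul G x y} = (if f \<in> bmul G d e then {(d, e)} else {})" for f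
    by auto
  then show ?thesis unfolding amul_def by auto
qed

lemma lin_induct [consumes 1, case_names empty single sdiff]:
  assumes X: "X \<subseteq> D" and P0: "P {}" and P1: "\<And>d. d \<in> D \<Longrightarrow> P {d}"
    and Ps: "\<And>X Y. X \<subseteq> D \<Longrightarrow> Y \<subseteq> D \<Longrightarrow> P X \<Longrightarrow> P Y \<Longrightarrow> P (sdiff X Y)"
  shows "P X"
proof -
  have "finite X" using X finD finite_subset by blast
  then show ?thesis using X
  proof (induction X rule: finite_induct)
    case empty
    show ?case by (rule P0)
  next
    case (insert x F)
    have "insert x F = sdiff F {x}" using insert.hyps(2) by (auto simp: sdiff_def)
    moreover have "P (sdiff F {x})"
      by (rule Ps) (use insert P1 in auto)
    ultimately show ?case by simp
  qed
qed

lemma finD_sub: "X \<subseteq> D \<Longrightarrow> finite X"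
  using finD finite_subset by blast

lemma sdiff_sub: "X \<subseteq> D \<Longrightarrow> Y \<subseteq> D \<Longrightarrow> sdiff X Y \<subseteq> D"
  unfolding sdiff_def by blast


lemma bform_sym:
  assumes X: "X \<subseteq> D" and Y: "Y \<subseteq> D"
  shows "bform G X Y = bform G Y X"
  using X
proof (induction X rule: lin_induct)
  case empty
  show ?case using bform_empty1 bform_empty2 by simp
next
  case (single d)
  show ?case using Y
  proof (induction Y rule: lin_induct)
    case empty
    show ?case using bform_empty1 bform_empty2 by simp
  next
    case (single e)
    show ?case using bform_single commutes_sym by simp
  next
    case (sdiff Y1 Y2)
    then show ?case using bform_lin1 bform_lin2 finD_sub by simp
  qed
next
  case (sdiff X1 X2)
  then show ?case using bform_lin1 bform_lin2 finD_sub Y by simp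
qed

lemma conj_inj_on: "g \<in> carrier G \<Longrightarrow> inj_on (\<lambda>d. conjg G d g) (carrier G)"
  by (rule inj_onI) (use conj_inj in blast)

lemma gact_sdiff:
  assumes "X \<subseteq> carrier G" "Y \<subseteq> carrier G" "g \<in> carrier G"
  shows "gact_set G g (sdiff X Y) = sdiff (gact_set G g X) (gact_set G g Y)"
proof -
  have i: "inj_on (\<lambda>d. conjg G d g) (carrier G)" using conj_inj_on assms(3) .
  have "gact_set G g (sdiff X Y) = (\<lambda>d. conjg G d g) ` (X - Y) \<union> (\<lambda>d. conjg G d g) ` (Y - X)"
    unfolding gact_set_def sdiff_def by (rule image_Un)
  also have "\<dots> = ((\<lambda>d. conjg G d g) ` X - (\<lambda>d. conjg G d g) ` Y) \<union> ((\<lambda>d. conjg G d g) ` Y - (\<lambda>d. conjg G d g) ` X)"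
    using inj_on_image_set_diff[OF i, of X Y] inj_on_image_set_diff[OF i, of Y X] assms by auto
  finally show ?thesis unfolding gact_set_def sdiff_def .
qed

lemma gact_single: "gact_set G g {d} = {conjg G d g}"
  unfolding gact_set_def by simp

lemma gact_empty: "gact_set G g {} = {}"
  unfolding gact_set_def by simp

lemma gact_sub: "X \<subseteq> D \<Longrightarrow> g \<in> carrier G \<Longrightarrow> gact_set G g X \<subseteq> D"
  unfolding gact_set_def using conj_D by blast

lemma gact_comp: "X \<subseteq> carrier G \<Longrightarrow> g \<in> carrier G \<Longrightarrow> h \<in> carrier G \<Longrightarrow>
    gact_set G (g \<otimes> h) X = gact_set G h (gact_set G g X)"
  unfolding gact_set_def image_image by (rule image_cong) (use conj_comp in auto)

lemma gact_one: "X \<subseteq> carrier G \<Longrightarrow> gact_set G \<one> X = X"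
  unfolding gact_set_def using conj_one by (simp add: subset_eq)

lemma gact_inv1: "X \<subseteq> carrier G \<Longrightarrow> g \<in> carrier G \<Longrightarrow> gact_set G (inv g) (gact_set G g X) = X"
  using gact_comp[of X g "inv g"] gact_one by simp

lemma gact_inv2: "X \<subseteq> carrier G \<Longrightarrow> g \<in> carrier G \<Longrightarrow> gact_set G g (gact_set G (inv g) X) = X"
  using gact_comp[of X "inv g" g] gact_one by simp

lemma conj_conj: "d \<in> carrier G \<Longrightarrow> e \<in> carrier G \<Longrightarrow> g \<in> carrier G \<Longrightarrow>
   conjg G (conjg G d e) g = conjg G (conjg G d g) (conjg G e g)"
proof -
  assume a: "d \<in> carrier G" "e \<in> carrier G" "g \<in> carrier G"
  have "conjg G (conjg G d g) (conjg G e g) = conjg G d (g \<otimes> conjg G e g)"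
    using conj_comp a conj_closed by simp
  also have "g \<otimes> conjg G e g = e \<otimes> g"
    using a cancel1[of g "e \<otimes> g"] by (simp add: conjg_eq m_assoc)
  finally show ?thesis using conj_comp a by simp
qed

lemma bmul_sub: "d \<in> D \<Longrightarrow> e \<in> D \<Longrightarrow> bmul G d e \<subseteq> D"
  unfolding bmul_def sdiff_def using conj_D Dc by auto

lemma amul_sub:
  assumes X: "X \<subseteq> D" and Y: "Y \<subseteq> D"
  shows "amul G X Y \<subseteq> D"
  using X
proof (induction X rule: lin_induct)
  case empty
  show ?case using amul_empty1 by simp
next
  case (single d)
  show ?case using Y
  proof (induction Y rule: lin_induct)
    case empty
    show ?case using amul_empty2 by simp
  next
    case (single e)
    show ?case using amul_single bmul_sub \<open>d \<in> D\<close> \<open>e \<in> D\<close> by simp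
  next
    case (sdiff Y1 Y2)
    then show ?case using amul_lin2 finD_sub sdiff_sub by simp
  qed
next
  case (sdiff X1 X2)
  then show ?case using amul_lin1 finD_sub sdiff_sub Y by simp
qed

lemma bform_gact:
  assumes X: "X \<subseteq> D" and Y: "Y \<subseteq> D" and g: "g \<in> carrier G"
  shows "bform G (gact_set G g X) (gact_set G g Y) = bform G X Y"
  using X
proof (induction X rule: lin_induct)
  case empty
  show ?case using bform_empty1 gact_empty by simp
next
  case (single d)
  show ?case using Y
  proof (induction Y rule: lin_induct)
    case empty
    show ?case using bform_empty2 gact_empty by simp
  next
    case (single e)
    show ?case using bform_single gact_single comm_conj Dc \<open>d \<in> D\<close> \<open>e \<in> D\<close> g by simp
  next
    case (sdiff Y1 Y2)
    have s: "Y1 \<subseteq> carrier G" "Y2 \<subseteq> carrier G" "{d} \<subseteq> carrier G" using sdiff Dsub \<open>d \<in> D\<close> by auto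
    have f: "finite (gact_set G g Y1)" "finite (gact_set G g Y2)" "finite (gact_set G g {d})"
      using gact_sub finD_sub sdiff g \<open>d \<in> D\<close> by auto
    show ?case using sdiff gact_sdiff[OF s(1,2) g] bform_lin2 finD_sub f by simp
  qed
next
  case (sdiff X1 X2)
  have s: "X1 \<subseteq> carrier G" "X2 \<subseteq> carrier G" using sdiff Dsub by auto
  have f: "finite (gact_set G g X1)" "finite (gact_set G g X2)" "finite (gact_set G g Y)"
    using gact_sub finD_sub sdiff g Y by auto
  show ?case using sdiff gact_sdiff[OF s g] bform_lin1 finD_sub f Y by simp
qed

lemma bmul_gact:
  assumes d: "d \<in> D" and e: "e \<in> D" and g: "g \<in> carrier G"
  shows "gact_set G g (bmul G d e) = bmul G (conjg G d g) (conjg G e g)"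
proof (cases "commutes G d e")
  case True
  then show ?thesis using comm_conj Dc d e g gact_empty by (simp add: bmul_def)
next
  case False
  have nc: "\<not> commutes G (conjg G d g) (conjg G e g)" using False comm_conj Dc d e g by simp
  have cc: "conjg G d e \<in> carrier G" using conj_closed Dc d e by simp
  have "gact_set G g (sdiff (sdiff {d} {e}) {conjg G d e}) =
      sdiff (sdiff (gact_set G g {d}) (gact_set G g {e})) (gact_set G g {conjg G d e})"
  proof -
    have s1: "sdiff {d} {e} \<subseteq> carrier G" using Dc d e by (auto simp: sdiff_def)
    have "gact_set G g (sdiff (sdiff {d} {e}) {conjg G d e}) = sdiff (gact_set G g (sdiff {d} {e})) (gact_set G g {conjg G d e})"
      using gact_sdiff[OF s1 _ g, of "{conjg G d e}"] cc by simp
    also have "gact_set G g (sdiff {d} {e}) = sdiff (gact_set G g {d}) (gact_set G g {e})"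
      using gact_sdiff[of "{d}" "{e}" g] Dc d e g by simp
    finally show ?thesis .
  qed
  also have "\<dots> = sdiff (sdiff {conjg G d g} {conjg G e g}) {conjg G (conjg G d g) (conjg G e g)}"
    using gact_single conj_conj Dc d e g by simp
  finally show ?thesis using False nc by (simp add: bmul_def)
qed


lemma amul_fin: "X \<subseteq> D \<Longrightarrow> Y \<subseteq> D \<Longrightarrow> finite (amul G X Y)"
  by (rule finD_sub[OF amul_sub])

lemma amul_gact:
  assumes X: "X \<subseteq> D" and Y: "Y \<subseteq> D" and g: "g \<in> carrier G"
  shows "gact_set G g (amul G X Y) = amul G (gact_set G g X) (gact_set G g Y)"
  using X
proof (induction X rule: lin_induct)
  case empty
  show ?case using amul_empty1 gact_empty by simp
next
  case (single d)
  show ?case using Y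
  proof (induction Y rule: lin_induct)
    case empty
    show ?case using amul_empty2 gact_empty by simp
  next
    case (single e)
    show ?case using amul_single gact_single bmul_gact \<open>d \<in> D\<close> \<open>e \<in> D\<close> g by simp
  next
    case (sdiff Y1 Y2)
    have dD: "{d} \<subseteq> D" using \<open>d \<in> D\<close> by simp
    have s: "Y1 \<subseteq> carrier G" "Y2 \<subseteq> carrier G" "amul G {d} Y1 \<subseteq> carrier G" "amul G {d} Y2 \<subseteq> carrier G"
      using sdiff(1,2) Dsub amul_sub[OF dD sdiff(1)] amul_sub[OF dD sdiff(2)] by auto
    have f: "finite (gact_set G g Y1)" "finite (gact_set G g Y2)" "finite (gact_set G g {d})"
      using gact_sub finD_sub sdiff g \<open>d \<in> D\<close> by auto
    have "gact_set G g (amul G {d} (sdiff Y1 Y2)) = gact_set G g (sdiff (amul G {d} Y1) (amul G {d} Y2))"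
      using amul_lin2[of "{d}" Y1 Y2] finD_sub[OF sdiff(1)] finD_sub[OF sdiff(2)] by simp
    also have "\<dots> = sdiff (gact_set G g (amul G {d} Y1)) (gact_set G g (amul G {d} Y2))"
      using gact_sdiff[OF s(3,4) g] .
    also have "\<dots> = sdiff (amul G (gact_set G g {d}) (gact_set G g Y1)) (amul G (gact_set G g {d}) (gact_set G g Y2))"
      unfolding sdiff(3) sdiff(4) ..
    also have "\<dots> = amul G (gact_set G g {d}) (sdiff (gact_set G g Y1) (gact_set G g Y2))"
      using amul_lin2[OF f(3) f(1) f(2)] by (rule sym)
    also have "\<dots> = amul G (gact_set G g {d}) (gact_set G g (sdiff Y1 Y2))"
      using gact_sdiff[OF s(1,2) g] by simp
    finally show ?case .
  qed
next
  case (sdiff X1 X2)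
  have s: "X1 \<subseteq> carrier G" "X2 \<subseteq> carrier G" "amul G X1 Y \<subseteq> carrier G" "amul G X2 Y \<subseteq> carrier G"
    using sdiff(1,2) Dsub amul_sub[OF sdiff(1) Y] amul_sub[OF sdiff(2) Y] by auto
  have f: "finite (gact_set G g X1)" "finite (gact_set G g X2)" "finite (gact_set G g Y)"
    using gact_sub finD_sub sdiff g Y by auto
  have "gact_set G g (amul G (sdiff X1 X2) Y) = gact_set G g (sdiff (amul G X1 Y) (amul G X2 Y))"
    using amul_lin1[of X1 X2 Y] finD_sub[OF sdiff(1)] finD_sub[OF sdiff(2)] finD_sub[OF Y] by simp
  also have "\<dots> = sdiff (gact_set G g (amul G X1 Y)) (gact_set G g (amul G X2 Y))"
    using gact_sdiff[OF s(3,4) g] .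
  also have "\<dots> = sdiff (amul G (gact_set G g X1) (gact_set G g Y)) (amul G (gact_set G g X2) (gact_set G g Y))"
    unfolding sdiff(3) sdiff(4) ..
  also have "\<dots> = amul G (sdiff (gact_set G g X1) (gact_set G g X2)) (gact_set G g Y)"
    using amul_lin1[OF f(1) f(2) f(3)] by (rule sym)
  also have "\<dots> = amul G (gact_set G g (sdiff X1 X2)) (gact_set G g Y)"
    using gact_sdiff[OF s(1,2) g] by simp
  finally show ?case .
qed

lemma bmul_comm: assumes d: "d \<in> D" and e: "e \<in> D" shows "bmul G d e = bmul G e d"
proof (cases "commutes G d e")
  case True
  then show ?thesis using commutes_sym by (simp add: bmul_def)
next
  case False
  have "conjg G d e = conjg G e d" by (rule conj_sym[OF d e False])
  then show ?thesis using False commutes_sym[of d e] by (auto simp: bmul_def sdiff_def)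
qed

lemma amul_comm:
  assumes X: "X \<subseteq> D" and Y: "Y \<subseteq> D"
  shows "amul G X Y = amul G Y X"
  using X
proof (induction X rule: lin_induct)
  case empty
  show ?case using amul_empty1 amul_empty2 by simp
next
  case (single d)
  show ?case using Y
  proof (induction Y rule: lin_induct)
    case empty
    show ?case using amul_empty1 amul_empty2 by simp
  next
    case (single e)
    show ?case using amul_single bmul_comm \<open>d \<in> D\<close> \<open>e \<in> D\<close> by simp
  next
    case (sdiff Y1 Y2)
    then show ?case using amul_lin1 amul_lin2 finD_sub by simp
  qed
next
  case (sdiff X1 X2)
  then show ?case using amul_lin1 amul_lin2 finD_sub Y by simp
qed

lemma dmul:
  assumes d: "d \<in> D" and X: "X \<subseteq> D"
  shows "amul G {d} X = sdiff (sdiff (if bform G {d} X then {d} else {}) X) (gact_set G d X)"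
  using X
proof (induction X rule: lin_induct)
  case empty
  show ?case using amul_empty2 bform_empty2 gact_empty by (simp add: sdiff_def)
next
  case (single e)
  show ?case
  proof (cases "commutes G d e")
    case True
    have "conjg G e d = e" using conj_commute[OF \<open>e \<in> D\<close> d] True commutes_sym by simp
    then show ?thesis using True amul_single bform_single gact_single by (simp add: bmul_def sdiff_def)
  next
    case False
    have "conjg G e d = conjg G d e" using conj_sym[OF d \<open>e \<in> D\<close> False] by simp
    then show ?thesis using False amul_single bform_single gact_single by (simp add: bmul_def)
  qed
next
  case (sdiff X1 X2)
  have s: "X1 \<subseteq> carrier G" "X2 \<subseteq> carrier G" using sdiff Dsub by auto
  have dc: "d \<in> carrier G" using Dc d .
  have "amul G {d} (sdiff X1 X2) = sdiff (amul G {d} X1) (amul G {d} X2)"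
    using amul_lin2 finD_sub sdiff by simp
  also have "\<dots> = sdiff (sdiff (sdiff (if bform G {d} X1 then {d} else {}) X1) (gact_set G d X1))
                        (sdiff (sdiff (if bform G {d} X2 then {d} else {}) X2) (gact_set G d X2))"
    using sdiff by simp
  also have "\<dots> = sdiff (sdiff (if bform G {d} X1 \<noteq> bform G {d} X2 then {d} else {}) (sdiff X1 X2))
                     (sdiff (gact_set G d X1) (gact_set G d X2))"
    by (rule Set.set_eqI) (simp split: if_splits; blast)
  also have "\<dots> = sdiff (sdiff (if bform G {d} (sdiff X1 X2) then {d} else {}) (sdiff X1 X2)) (gact_set G d (sdiff X1 X2))"
    using bform_lin2 finD_sub sdiff gact_sdiff[OF s dc] by simp
  finally show ?case .
qed

lemma bform_tri1: "bform G (sdiff (sdiff {a} {b}) {c}) {f} = (((\<not> commutes G a f) \<noteq> (\<not> commutes G b f)) \<noteq> (\<not> commutes G c f))"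
proof -
  have f: "finite (sdiff {a} {b})" by (simp add: sdiff_def)
  show ?thesis using bform_lin1[OF f, of "{c}" "{f}"] bform_lin1[of "{a}" "{b}" "{f}"] bform_single by simp
qed

lemma bform_tri2: "bform G {f} (sdiff (sdiff {a} {b}) {c}) = (((\<not> commutes G f a) \<noteq> (\<not> commutes G f b)) \<noteq> (\<not> commutes G f c))"
proof -
  have f: "finite (sdiff {a} {b})" by (simp add: sdiff_def)
  show ?thesis using bform_lin2[OF _ f, of "{f}" "{c}"] bform_lin2[of "{f}" "{a}" "{b}"] bform_single by simp
qed

lemma assoc_base:
  assumes d: "d \<in> D" and e: "e \<in> D" and f: "f \<in> D"
  shows "bform G (bmul G d e) {f} = bform G {d} (bmul G e f)"
proof (cases "commutes G d e")
  case de: True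
  show ?thesis
  proof (cases "commutes G e f")
    case True
    then show ?thesis using de bform_empty1 bform_empty2 by (simp add: bmul_def)
  next
    case False
    have "conjg G e f = conjg G f e" using conj_sym[OF e f False] .
    moreover have "commutes G d (conjg G f e) = commutes G (conjg G d e) (conjg G f e)"
      using conj_commute[OF d e de] by simp
    moreover have "\<dots> = commutes G d f" using comm_conj Dc d e f by simp
    ultimately have "commutes G d (conjg G e f) = commutes G d f" by simp
    then show ?thesis using de False bform_empty1 bform_tri2 by (simp add: bmul_def)
  qed
next
  case de: False
  show ?thesis
  proof (cases "commutes G e f")
    case True
    have "conjg G f e = f" using conj_commute[OF f e] True commutes_sym by simp
    then have "commutes G (conjg G d e) f = commutes G (conjg G d e) (conjg G f e)" by simp
    also have "\<dots> = commutes G d f" using comm_conj Dc d e f by simp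
    finally show ?thesis using de True bform_empty2 bform_tri1 by (simp add: bmul_def)
  next
    case False
    have "conjg G d e = conjg G e d" using conj_sym[OF d e de] .
    then have "commutes G (conjg G d e) f = commutes G (conjg G (conjg G e d) e) (conjg G f e)"
      using comm_conj Dc d e f conj_closed by simp
    also have "\<dots> = commutes G d (conjg G f e)" using conj_back[OF d e de] by simp
    also have "conjg G f e = conjg G e f" using conj_sym[OF e f False] by simp
    finally show ?thesis using de False bform_tri1 bform_tri2 by (simp add: bmul_def)
  qed
qed

lemma form_assoc:
  assumes X: "X \<subseteq> D" and Y: "Y \<subseteq> D" and Z: "Z \<subseteq> D"
  shows "bform G (amul G X Y) Z = bform G X (amul G Y Z)"
  using X
proof (induction X rule: lin_induct)
  case empty
  show ?case using amul_empty1 bform_empty1 by simp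
next
  case (single d)
  show ?case using Y
  proof (induction Y rule: lin_induct)
    case empty
    show ?case using amul_empty1 amul_empty2 bform_empty1 bform_empty2 by simp
  next
    case (single e)
    show ?case using Z
    proof (induction Z rule: lin_induct)
      case empty
      show ?case using amul_empty2 bform_empty2 by simp
    next
      case (single f)
      show ?case using amul_single assoc_base \<open>d \<in> D\<close> \<open>e \<in> D\<close> \<open>f \<in> D\<close> by simp
    next
      case (sdiff Z1 Z2)
      have f: "finite (amul G {d} {e})" using amul_fin \<open>d \<in> D\<close> \<open>e \<in> D\<close> by simp
      have f2: "finite (amul G {e} Z1)" "finite (amul G {e} Z2)" using amul_fin \<open>e \<in> D\<close> sdiff by auto
      show ?case using sdiff bform_lin2 amul_lin2 finD_sub f f2 by simp
    qed
  next
    case (sdiff Y1 Y2)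
    have f: "finite (amul G {d} Y1)" "finite (amul G {d} Y2)" using amul_fin \<open>d \<in> D\<close> sdiff by auto
    have f2: "finite (amul G Y1 Z)" "finite (amul G Y2 Z)" using amul_fin Z sdiff by auto
    show ?case using sdiff bform_lin1 bform_lin2 amul_lin1 amul_lin2 finD_sub f f2 Z by simp
  qed
next
  case (sdiff X1 X2)
  have f: "finite (amul G X1 Y)" "finite (amul G X2 Y)" "finite (amul G Y Z)" using amul_fin Y Z sdiff by auto
  show ?case using sdiff bform_lin1 amul_lin1 finD_sub f Y Z by simp
qed


section \<open>Radical and quotient\<close>

lemma Aalg_iff: "X \<in> Aalg D \<longleftrightarrow> X \<subseteq> D"
  unfolding Aalg_def using finD_sub by blast

lemma V_iff: "X \<in> Vrad G D \<longleftrightarrow> X \<subseteq> D \<and> (\<forall>Y. Y \<subseteq> D \<longrightarrow> \<not> bform G X Y)"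
  unfolding Vrad_def using Aalg_iff by auto

lemma V_sub: "v \<in> Vrad G D \<Longrightarrow> v \<subseteq> D"
  using V_iff by blast

lemma V_empty: "{} \<in> Vrad G D"
  using V_iff bform_empty1 by blast

lemma V_sdiff: assumes v: "v \<in> Vrad G D" and w: "w \<in> Vrad G D" shows "sdiff v w \<in> Vrad G D"
proof -
  have s: "v \<subseteq> D" "w \<subseteq> D" using v w V_sub by auto
  have "\<not> bform G (sdiff v w) Y" if Y: "Y \<subseteq> D" for Y
    using bform_lin1[OF finD_sub[OF s(1)] finD_sub[OF s(2)] finD_sub[OF Y]] v w Y V_iff by blast
  then show ?thesis using V_iff sdiff_sub s by blast
qed

lemma V_form2: "v \<in> Vrad G D \<Longrightarrow> X \<subseteq> D \<Longrightarrow> \<not> bform G X v"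
proof -
  assume v: "v \<in> Vrad G D" and X: "X \<subseteq> D"
  have "bform G X v = bform G v X" using bform_sym[OF X V_sub[OF v]] .
  then show ?thesis using v X V_iff by blast
qed

lemma V_amul: assumes v: "v \<in> Vrad G D" and Y: "Y \<subseteq> D" shows "amul G v Y \<in> Vrad G D"
proof -
  have s: "v \<subseteq> D" using v V_sub by auto
  have "\<not> bform G (amul G v Y) Z" if Z: "Z \<subseteq> D" for Z
  proof -
    have "bform G (amul G v Y) Z = bform G v (amul G Y Z)" using form_assoc[OF s Y Z] .
    moreover have "\<not> bform G v (amul G Y Z)" using v V_iff amul_sub[OF Y Z] by blast
    ultimately show ?thesis by simp
  qed
  then show ?thesis using V_iff amul_sub[OF s Y] by blast
qed

lemma V_amul2: "v \<in> Vrad G D \<Longrightarrow> Y \<subseteq> D \<Longrightarrow> amul G Y v \<in> Vrad G D"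
proof -
  assume v: "v \<in> Vrad G D" and Y: "Y \<subseteq> D"
  have "amul G Y v = amul G v Y" using amul_comm[OF Y V_sub[OF v]] .
  then show ?thesis using V_amul[OF v Y] by simp
qed

lemma V_gact: assumes v: "v \<in> Vrad G D" and g: "g \<in> carrier G" shows "gact_set G g v \<in> Vrad G D"
proof -
  have s: "v \<subseteq> D" using v V_sub by auto
  have "\<not> bform G (gact_set G g v) Z" if Z: "Z \<subseteq> D" for Z
  proof -
    have ig: "inv g \<in> carrier G" using g by simp
    have Z': "gact_set G (inv g) Z \<subseteq> D" using gact_sub[OF Z ig] .
    have "Z = gact_set G g (gact_set G (inv g) Z)" using gact_inv2 Z Dsub g by auto
    then have "bform G (gact_set G g v) Z = bform G v (gact_set G (inv g) Z)"
      using bform_gact[OF s Z' g] by simp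
    then show ?thesis using v V_iff Z' by blast
  qed
  then show ?thesis using V_iff gact_sub[OF s g] by blast
qed

lemma qcls_mem: "X \<in> qcls G D X"
  unfolding qcls_def using V_empty by (auto simp: sdiff_def intro!: exI[of _ "{}"])

lemma qcls_sub: "X \<subseteq> D \<Longrightarrow> Y \<in> qcls G D X \<Longrightarrow> Y \<subseteq> D"
  unfolding qcls_def using V_sub sdiff_sub by blast

lemma sd_assoc: "sdiff (sdiff X Y) Z = sdiff X (sdiff Y Z)"
  by (rule Set.set_eqI) auto

lemma sd_comm: "sdiff X Y = sdiff Y X"
  by (rule Set.set_eqI) auto

lemma sd_self: "sdiff X X = {}"
  by (rule Set.set_eqI) auto

lemma sd_empty: "sdiff X {} = X" "sdiff {} X = X"
  by (rule Set.set_eqI, simp)+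

lemma qcls_eq:
  assumes X: "X \<subseteq> D" and Y: "Y \<subseteq> D" and XY: "sdiff X Y \<in> Vrad G D"
  shows "qcls G D X = qcls G D Y"
proof -
  have "qcls G D X \<subseteq> qcls G D Y" if XY: "sdiff X Y \<in> Vrad G D" for X Y
  proof
    fix Z assume "Z \<in> qcls G D X"
    then obtain v where v: "v \<in> Vrad G D" "Z = sdiff X v" unfolding qcls_def by blast
    have "Z = sdiff Y (sdiff (sdiff X Y) v)" using v(2) by (auto simp: sdiff_def)
    moreover have "sdiff (sdiff X Y) v \<in> Vrad G D" using V_sdiff XY v(1) by blast
    ultimately show "Z \<in> qcls G D Y" unfolding qcls_def by blast
  qed
  moreover have "sdiff Y X \<in> Vrad G D" using XY sd_comm by metis
  ultimately show ?thesis using XY by blast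
qed

lemma qcls_eq_iff:
  assumes X: "X \<subseteq> D" and Y: "Y \<subseteq> D"
  shows "qcls G D X = qcls G D Y \<longleftrightarrow> sdiff X Y \<in> Vrad G D"
proof
  assume e: "qcls G D X = qcls G D Y"
  have "X \<in> qcls G D Y" using e qcls_mem by metis
  then obtain v where v: "v \<in> Vrad G D" "X = sdiff Y v" unfolding qcls_def by blast
  have "sdiff X Y = v" using v(2) by (auto simp: sdiff_def)
  then show "sdiff X Y \<in> Vrad G D" using v(1) by simp
qed (rule qcls_eq[OF X Y])

lemma qadd_cls:
  assumes X: "X \<subseteq> D" and Y: "Y \<subseteq> D"
  shows "qadd (qcls G D X) (qcls G D Y) = qcls G D (sdiff X Y)"
proof (rule Set.set_eqI)
  fix Z
  show "Z \<in> qadd (qcls G D X) (qcls G D Y) \<longleftrightarrow> Z \<in> qcls G D (sdiff X Y)"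
  proof
    assume "Z \<in> qadd (qcls G D X) (qcls G D Y)"
    then obtain v w where vw: "v \<in> Vrad G D" "w \<in> Vrad G D" "Z = sdiff (sdiff X v) (sdiff Y w)"
      unfolding qadd_def qcls_def by blast
    have "Z = sdiff (sdiff X Y) (sdiff v w)" using vw(3) by (auto simp: sdiff_def)
    then show "Z \<in> qcls G D (sdiff X Y)" using V_sdiff vw unfolding qcls_def by blast
  next
    assume "Z \<in> qcls G D (sdiff X Y)"
    then obtain v where v: "v \<in> Vrad G D" "Z = sdiff (sdiff X Y) v" unfolding qcls_def by blast
    have "Z = sdiff (sdiff X v) (sdiff Y {})" using v(2) by (auto simp: sdiff_def)
    moreover have "sdiff X v \<in> qcls G D X" using v(1) unfolding qcls_def by blast
    moreover have "sdiff Y {} \<in> qcls G D Y" using V_empty unfolding qcls_def by blast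
    ultimately show "Z \<in> qadd (qcls G D X) (qcls G D Y)" unfolding qadd_def by blast
  qed
qed

lemma qmul_cls:
  assumes X: "X \<subseteq> D" and Y: "Y \<subseteq> D"
  shows "qmul G D (qcls G D X) (qcls G D Y) = qcls G D (amul G X Y)"
proof (rule Set.set_eqI)
  fix Z
  show "Z \<in> qmul G D (qcls G D X) (qcls G D Y) \<longleftrightarrow> Z \<in> qcls G D (amul G X Y)"
  proof
    assume "Z \<in> qmul G D (qcls G D X) (qcls G D Y)"
    then obtain v1 v2 v where vs: "v1 \<in> Vrad G D" "v2 \<in> Vrad G D" "v \<in> Vrad G D"
        "Z = sdiff (amul G (sdiff X v1) (sdiff Y v2)) v"
      unfolding qmul_def qcls_def by blast
    have s: "v1 \<subseteq> D" "v2 \<subseteq> D" using vs V_sub by auto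
    have f: "finite X" "finite Y" "finite v1" "finite v2" using finD_sub X Y s by auto
    have "amul G (sdiff X v1) (sdiff Y v2) =
        sdiff (sdiff (amul G X Y) (amul G X v2)) (sdiff (amul G v1 Y) (amul G v1 v2))"
    proof -
      have fy: "finite (sdiff Y v2)" using f by (simp add: sdiff_def)
      show ?thesis using amul_lin1[OF f(1) f(3) fy] amul_lin2[OF f(1) f(2) f(4)] amul_lin2[OF f(3) f(2) f(4)] by simp
    qed
    then have "Z = sdiff (amul G X Y) (sdiff (sdiff (amul G X v2) (sdiff (amul G v1 Y) (amul G v1 v2))) v)"
      using vs(4) by (auto simp: sdiff_def)
    moreover have "sdiff (sdiff (amul G X v2) (sdiff (amul G v1 Y) (amul G v1 v2))) v \<in> Vrad G D"
      using V_sdiff[OF V_sdiff[OF V_amul2[OF vs(2) X] V_sdiff[OF V_amul[OF vs(1) Y] V_amul[OF vs(1) s(2)]]] vs(3)] .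
    ultimately show "Z \<in> qcls G D (amul G X Y)" unfolding qcls_def by blast
  next
    assume "Z \<in> qcls G D (amul G X Y)"
    then obtain v where v: "v \<in> Vrad G D" "Z = sdiff (amul G X Y) v" unfolding qcls_def by blast
    then show "Z \<in> qmul G D (qcls G D X) (qcls G D Y)"
      unfolding qmul_def using qcls_mem by blast
  qed
qed


lemma gact_cls:
  assumes X: "X \<subseteq> D" and g: "g \<in> carrier G"
  shows "gact_q G g (qcls G D X) = qcls G D (gact_set G g X)"
proof (rule Set.set_eqI)
  fix Z
  have Xc: "X \<subseteq> carrier G" using X Dsub by auto
  show "Z \<in> gact_q G g (qcls G D X) \<longleftrightarrow> Z \<in> qcls G D (gact_set G g X)"
  proof
    assume "Z \<in> gact_q G g (qcls G D X)"
    then obtain v where v: "v \<in> Vrad G D" "Z = gact_set G g (sdiff X v)"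
      unfolding gact_q_def qcls_def by blast
    have vc: "v \<subseteq> carrier G" using V_sub[OF v(1)] Dsub by auto
    have "Z = sdiff (gact_set G g X) (gact_set G g v)" using v(2) gact_sdiff[OF Xc vc g] by simp
    then show "Z \<in> qcls G D (gact_set G g X)" using V_gact[OF v(1) g] unfolding qcls_def by blast
  next
    assume "Z \<in> qcls G D (gact_set G g X)"
    then obtain w where w: "w \<in> Vrad G D" "Z = sdiff (gact_set G g X) w" unfolding qcls_def by blast
    have ig: "inv g \<in> carrier G" using g by simp
    define v where "v = gact_set G (inv g) w"
    have v: "v \<in> Vrad G D" unfolding v_def using V_gact[OF w(1) ig] .
    have vc: "v \<subseteq> carrier G" using V_sub[OF v] Dsub by auto
    have wc: "w \<subseteq> carrier G" using V_sub[OF w(1)] Dsub by auto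
    have "gact_set G g v = w" unfolding v_def using gact_inv2[OF wc g] .
    then have "Z = gact_set G g (sdiff X v)" using w(2) gact_sdiff[OF Xc vc g] by simp
    moreover have "sdiff X v \<in> qcls G D X" using v unfolding qcls_def by blast
    ultimately show "Z \<in> gact_q G g (qcls G D X)" unfolding gact_q_def by blast
  qed
qed

lemma qzero_cls: "qzero G D = qcls G D {}"
  unfolding qzero_def ..

lemma qform_cls:
  assumes X: "X \<subseteq> D" and Y: "Y \<subseteq> D"
  shows "qform G (qcls G D X) (qcls G D Y) = bform G X Y"
proof -
  define X' where "X' = (SOME Z. Z \<in> qcls G D X)"
  define Y' where "Y' = (SOME Z. Z \<in> qcls G D Y)"
  have X'm: "X' \<in> qcls G D X" unfolding X'_def using qcls_mem by (rule someI)
  have Y'm: "Y' \<in> qcls G D Y" unfolding Y'_def using qcls_mem by (rule someI)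
  obtain v where v: "v \<in> Vrad G D" "X' = sdiff X v" using X'm unfolding qcls_def by blast
  obtain w where w: "w \<in> Vrad G D" "Y' = sdiff Y w" using Y'm unfolding qcls_def by blast
  have s: "v \<subseteq> D" "w \<subseteq> D" using v w V_sub by auto
  have f: "finite X" "finite Y" "finite v" "finite w" using finD_sub X Y s by auto
  have fy: "finite (sdiff Y w)" using f by (simp add: sdiff_def)
  have "bform G X' Y' = bform G (sdiff X v) (sdiff Y w)" using v w by simp
  also have "\<dots> = (bform G X (sdiff Y w) \<noteq> bform G v (sdiff Y w))" using bform_lin1[OF f(1) f(3) fy] .
  also have "bform G v (sdiff Y w) = False" using v(1) V_iff sdiff_sub[OF Y s(2)] by blast
  also have "bform G X (sdiff Y w) = (bform G X Y \<noteq> bform G X w)" using bform_lin2[OF f(1) f(2) f(4)] .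
  also have "bform G X w = False" using V_form2[OF w(1) X] by simp
  finally have "bform G X' Y' = bform G X Y" by simp
  then show ?thesis unfolding qform_def X'_def Y'_def .
qed

lemma Abar_iff: "x \<in> Abar G D \<longleftrightarrow> (\<exists>X. X \<subseteq> D \<and> x = qcls G D X)"
  unfolding Abar_def using Aalg_iff by blast

lemma AbarE: assumes "x \<in> Abar G D" obtains X where "X \<subseteq> D" "x = qcls G D X"
  using assms Abar_iff by blast

lemma Abar_cls: "X \<subseteq> D \<Longrightarrow> qcls G D X \<in> Abar G D"
  using Abar_iff by blast

lemma Abar_finite: "finite (Abar G D)"
proof -
  have "Aalg D \<subseteq> Pow D" using Aalg_iff by blast
  then have "finite (Aalg D)" using finD finite_subset by blast
  then show ?thesis unfolding Abar_def by simp
qed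


lemma h_selfinv: "x \<in> Abar G D \<Longrightarrow> qadd x x = qzero G D"
  by (elim AbarE) (simp add: qadd_cls sd_self qzero_cls)

lemma h_add_closed: "x \<in> Abar G D \<Longrightarrow> y \<in> Abar G D \<Longrightarrow> qadd x y \<in> Abar G D"
  by (elim AbarE) (simp add: qadd_cls Abar_cls sdiff_sub)

lemma h_mul_closed: "x \<in> Abar G D \<Longrightarrow> y \<in> Abar G D \<Longrightarrow> qmul G D x y \<in> Abar G D"
  by (elim AbarE) (simp add: qmul_cls Abar_cls amul_sub)

lemma h_mul_comm: "x \<in> Abar G D \<Longrightarrow> y \<in> Abar G D \<Longrightarrow> qmul G D x y = qmul G D y x"
  by (elim AbarE) (simp add: qmul_cls amul_comm)

lemma h_mul_add: "x \<in> Abar G D \<Longrightarrow> y \<in> Abar G D \<Longrightarrow> z \<in> Abar G D \<Longrightarrow>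
   qmul G D (qadd x y) z = qadd (qmul G D x z) (qmul G D y z)"
proof (elim AbarE)
  fix X Y Z assume X: "X \<subseteq> D" and Y: "Y \<subseteq> D" and Z: "Z \<subseteq> D"
    and e: "x = qcls G D X" "y = qcls G D Y" "z = qcls G D Z"
  have "qmul G D (qadd x y) z = qcls G D (amul G (sdiff X Y) Z)"
    using e X Y Z qadd_cls qmul_cls sdiff_sub by simp
  also have "amul G (sdiff X Y) Z = sdiff (amul G X Z) (amul G Y Z)"
    using amul_lin1 finD_sub X Y Z by simp
  also have "qcls G D (sdiff (amul G X Z) (amul G Y Z)) = qadd (qmul G D x z) (qmul G D y z)"
    using e X Y Z qadd_cls qmul_cls amul_sub by simp
  finally show ?thesis .
qed

lemma h_form_sym: "x \<in> Abar G D \<Longrightarrow> y \<in> Abar G D \<Longrightarrow> qform G x y = qform G y x"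
  by (elim AbarE) (simp add: qform_cls bform_sym)

lemma h_form_add: "x \<in> Abar G D \<Longrightarrow> y \<in> Abar G D \<Longrightarrow> z \<in> Abar G D \<Longrightarrow>
   qform G (qadd x y) z = (qform G x z \<noteq> qform G y z)"
proof (elim AbarE)
  fix X Y Z assume X: "X \<subseteq> D" and Y: "Y \<subseteq> D" and Z: "Z \<subseteq> D"
    and e: "x = qcls G D X" "y = qcls G D Y" "z = qcls G D Z"
  have "qform G (qadd x y) z = bform G (sdiff X Y) Z"
    using e X Y Z qadd_cls qform_cls sdiff_sub by simp
  also have "\<dots> = (bform G X Z \<noteq> bform G Y Z)" using bform_lin1 finD_sub X Y Z by simp
  finally show ?thesis using e X Y Z qform_cls by simp
qed

lemma h_form_assoc: "x \<in> Abar G D \<Longrightarrow> y \<in> Abar G D \<Longrightarrow> z \<in> Abar G D \<Longrightarrow>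
   qform G (qmul G D x y) z = qform G x (qmul G D y z)"
proof (elim AbarE)
  fix X Y Z assume X: "X \<subseteq> D" and Y: "Y \<subseteq> D" and Z: "Z \<subseteq> D"
    and e: "x = qcls G D X" "y = qcls G D Y" "z = qcls G D Z"
  show ?thesis using e X Y Z qmul_cls qform_cls amul_sub form_assoc by simp
qed

lemma h_nondeg: "x \<in> Abar G D \<Longrightarrow> x \<noteq> qzero G D \<Longrightarrow> \<exists>y\<in>Abar G D. qform G x y"
proof (elim AbarE)
  fix X assume X: "X \<subseteq> D" and e: "x = qcls G D X" and nz: "x \<noteq> qzero G D"
  have "X \<notin> Vrad G D"
  proof
    assume "X \<in> Vrad G D"
    moreover have "sdiff X {} = X" by (simp add: sdiff_def)
    ultimately have "qcls G D X = qcls G D {}" using qcls_eq_iff[OF X, of "{}"] by simp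
    then show False using nz e qzero_cls by simp
  qed
  then obtain Y where Y: "Y \<subseteq> D" "bform G X Y" using V_iff X by blast
  then show ?thesis using e X qform_cls Abar_cls by metis
qed

lemma h_act_closed: "g \<in> carrier G \<Longrightarrow> x \<in> Abar G D \<Longrightarrow> gact_q G g x \<in> Abar G D"
  by (elim AbarE) (simp add: gact_cls Abar_cls gact_sub)

lemma h_act_add: "g \<in> carrier G \<Longrightarrow> x \<in> Abar G D \<Longrightarrow> y \<in> Abar G D \<Longrightarrow>
    gact_q G g (qadd x y) = qadd (gact_q G g x) (gact_q G g y)"
proof (elim AbarE)
  fix X Y assume g: "g \<in> carrier G" and X: "X \<subseteq> D" and Y: "Y \<subseteq> D"
    and e: "x = qcls G D X" "y = qcls G D Y"
  have s: "X \<subseteq> carrier G" "Y \<subseteq> carrier G" using X Y Dsub by auto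
  show ?thesis using e X Y g qadd_cls gact_cls sdiff_sub gact_sub gact_sdiff[OF s g] by simp
qed

lemma h_act_mul: "g \<in> carrier G \<Longrightarrow> x \<in> Abar G D \<Longrightarrow> y \<in> Abar G D \<Longrightarrow>
    gact_q G g (qmul G D x y) = qmul G D (gact_q G g x) (gact_q G g y)"
proof (elim AbarE)
  fix X Y assume g: "g \<in> carrier G" and X: "X \<subseteq> D" and Y: "Y \<subseteq> D"
    and e: "x = qcls G D X" "y = qcls G D Y"
  show ?thesis using e X Y g qmul_cls gact_cls amul_sub gact_sub amul_gact by simp
qed

lemma h_act_form: "g \<in> carrier G \<Longrightarrow> x \<in> Abar G D \<Longrightarrow> y \<in> Abar G D \<Longrightarrow>
    qform G (gact_q G g x) (gact_q G g y) = qform G x y"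
proof (elim AbarE)
  fix X Y assume g: "g \<in> carrier G" and X: "X \<subseteq> D" and Y: "Y \<subseteq> D"
    and e: "x = qcls G D X" "y = qcls G D Y"
  show ?thesis using e X Y g qform_cls gact_cls gact_sub bform_gact by simp
qed

lemma h_act_comp: "g \<in> carrier G \<Longrightarrow> h \<in> carrier G \<Longrightarrow> x \<in> Abar G D \<Longrightarrow>
    gact_q G (g \<otimes> h) x = gact_q G h (gact_q G g x)"
proof (elim AbarE)
  fix X assume g: "g \<in> carrier G" and h: "h \<in> carrier G" and X: "X \<subseteq> D" and e: "x = qcls G D X"
  have s: "X \<subseteq> carrier G" using X Dsub by auto
  show ?thesis using e X g h gact_cls gact_sub gact_comp[OF s g h] by simp
qed

lemma h_act_one: "x \<in> Abar G D \<Longrightarrow> gact_q G \<one> x = x"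
proof (elim AbarE)
  fix X assume X: "X \<subseteq> D" and e: "x = qcls G D X"
  have s: "X \<subseteq> carrier G" using X Dsub by auto
  show ?thesis using e X gact_cls gact_one[OF s] by simp
qed

lemma h_dl_closed: "d \<in> D \<Longrightarrow> qcls G D {d} \<in> Abar G D"
  by (simp add: Abar_cls)

lemma h_dl_conj: "d \<in> D \<Longrightarrow> e \<in> D \<Longrightarrow> \<exists>g\<in>carrier G. gact_q G g (qcls G D {d}) = qcls G D {e}"
proof -
  assume d: "d \<in> D" and e: "e \<in> D"
  obtain g where g: "g \<in> carrier G" "conjg G d g = e" using D_trans d e by blast
  have "gact_q G g (qcls G D {d}) = qcls G D {e}" using gact_cls[of "{d}" g] d g gact_single by simp
  then show ?thesis using g by blast
qed

lemma h_dl_mul: "d \<in> D \<Longrightarrow> x \<in> Abar G D \<Longrightarrow>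
   qmul G D (qcls G D {d}) x = qadd (qadd (if qform G (qcls G D {d}) x then qcls G D {d} else qzero G D) x) (gact_q G d x)"
proof (elim AbarE)
  fix X assume d: "d \<in> D" and X: "X \<subseteq> D" and e: "x = qcls G D X"
  have dD: "{d} \<subseteq> D" using d by simp
  have dc: "d \<in> carrier G" using Dc d .
  have iD: "(if bform G {d} X then {d} else {}) \<subseteq> D" using d by simp
  have c1: "qcls G D (if bform G {d} X then {d} else {}) = (if qform G (qcls G D {d}) x then qcls G D {d} else qzero G D)"
    using qform_cls[OF dD X] e qzero_cls by simp
  have "qmul G D (qcls G D {d}) x = qcls G D (amul G {d} X)" using e qmul_cls[OF dD X] by simp
  also have "\<dots> = qcls G D (sdiff (sdiff (if bform G {d} X then {d} else {}) X) (gact_set G d X))"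
    using dmul[OF d X] by simp
  also have "\<dots> = qadd (qcls G D (sdiff (if bform G {d} X then {d} else {}) X)) (qcls G D (gact_set G d X))"
    using qadd_cls[OF sdiff_sub[OF iD X] gact_sub[OF X dc]] by simp
  also have "qcls G D (sdiff (if bform G {d} X then {d} else {}) X) = qadd (qcls G D (if bform G {d} X then {d} else {})) x"
    using qadd_cls[OF iD X] e by simp
  also have "qcls G D (gact_set G d X) = gact_q G d x" using gact_cls[OF X dc] e by simp
  finally show ?thesis using c1 by simp
qed

lemma h_span:
  assumes z: "qzero G D \<in> S" and cl: "\<And>x d. x \<in> S \<Longrightarrow> d \<in> D \<Longrightarrow> qadd x (qcls G D {d}) \<in> S"
  shows "Abar G D \<subseteq> S"
proof
  fix x assume "x \<in> Abar G D"
  then obtain X where X: "X \<subseteq> D" "x = qcls G D X" by (elim AbarE)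
  have "finite X" using finD_sub X(1) .
  then have "qcls G D X \<in> S" using X(1)
  proof (induction X rule: finite_induct)
    case empty
    then show ?case using z qzero_cls by simp
  next
    case (insert a F)
    have "insert a F = sdiff F {a}" using insert.hyps(2) by (auto simp: sdiff_def)
    have FD: "F \<subseteq> D" "{a} \<subseteq> D" using insert.prems by auto
    have "qcls G D (insert a F) = qadd (qcls G D F) (qcls G D {a})"
      using qadd_cls[OF FD] \<open>insert a F = sdiff F {a}\<close> by simp
    then show ?case using cl insert by simp
  qed
  then show "x \<in> S" using X by simp
qed

lemma h_nontriv:
  assumes line: "\<exists>L \<in> fischer_lines G D. L \<notin> Vrad G D"
  shows "\<exists>x\<in>Abar G D. \<exists>y\<in>Abar G D. qmul G D x y \<noteq> qzero G D"
proof -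
  obtain L where L: "L \<in> fischer_lines G D" "L \<notin> Vrad G D" using line by blast
  then obtain d e where de: "d \<in> D" "e \<in> D" "\<not> commutes G d e" "L = {d, e, conjg G d e}"
    unfolding fischer_lines_def by blast
  have ne: "d \<noteq> e" "conjg G d e \<noteq> d" "conjg G d e \<noteq> e"
    using nc_ne conj_ne1 conj_ne2 de by auto
  have cD: "conjg G d e \<in> D" using conj_D de Dc by simp
  have "bmul G d e = L" using de ne by (auto simp: bmul_def sdiff_def)
  then have "qmul G D (qcls G D {d}) (qcls G D {e}) = qcls G D L"
    using qmul_cls[of "{d}" "{e}"] de amul_single by simp
  moreover have LD: "L \<subseteq> D" using de cD by simp
  moreover have "qcls G D L \<noteq> qzero G D"
  proof
    assume "qcls G D L = qzero G D"
    then have "sdiff L {} \<in> Vrad G D" using qcls_eq_iff[OF LD, of "{}"] qzero_cls by simp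
    moreover have "sdiff L {} = L" by (simp add: sdiff_def)
    ultimately show False using L(2) by simp
  qed
  ultimately show ?thesis using Abar_cls de by (metis empty_subsetI insert_subset)
qed

lemma h_cm: "comm_monoid (Abar_add G D)"
proof (rule comm_monoidI)
  show "x \<otimes>\<^bsub>Abar_add G D\<^esub> y \<in> carrier (Abar_add G D)"
    if "x \<in> carrier (Abar_add G D)" "y \<in> carrier (Abar_add G D)" for x y
    using that h_add_closed by (simp add: Abar_add_def)
  show "\<one>\<^bsub>Abar_add G D\<^esub> \<in> carrier (Abar_add G D)"
    using Abar_cls[of "{}"] qzero_cls by (simp add: Abar_add_def)
  show "x \<otimes>\<^bsub>Abar_add G D\<^esub> y \<otimes>\<^bsub>Abar_add G D\<^esub> z = x \<otimes>\<^bsub>Abar_add G D\<^esub> (y \<otimes>\<^bsub>Abar_add G D\<^esub> z)"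
    if "x \<in> carrier (Abar_add G D)" "y \<in> carrier (Abar_add G D)" "z \<in> carrier (Abar_add G D)" for x y z
  proof -
    have "x \<in> Abar G D" "y \<in> Abar G D" "z \<in> Abar G D" using that by (simp_all add: Abar_add_def)
    then show ?thesis
      by (elim AbarE) (simp add: Abar_add_def qadd_cls sdiff_sub sd_assoc)
  qed
  show "\<one>\<^bsub>Abar_add G D\<^esub> \<otimes>\<^bsub>Abar_add G D\<^esub> x = x" if "x \<in> carrier (Abar_add G D)" for x
  proof -
    have "x \<in> Abar G D" using that by (simp add: Abar_add_def)
    then show ?thesis
      by (elim AbarE) (simp add: Abar_add_def qadd_cls qzero_cls sd_empty)
  qed
  show "x \<otimes>\<^bsub>Abar_add G D\<^esub> y = y \<otimes>\<^bsub>Abar_add G D\<^esub> x"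
    if "x \<in> carrier (Abar_add G D)" "y \<in> carrier (Abar_add G D)" for x y
  proof -
    have "x \<in> Abar G D" "y \<in> Abar G D" using that by (simp_all add: Abar_add_def)
    then show ?thesis
      by (elim AbarE) (simp add: Abar_add_def qadd_cls sd_comm)
  qed
qed


end

lemma Abar_add_simps:
  "carrier (Abar_add G D) = Abar G D" "mult (Abar_add G D) = qadd" "one (Abar_add G D) = qzero G D"
  by (simp_all add: Abar_add_def)

theorem corollary2p6:
  fixes G :: "('a, 'b) monoid_scheme" and D :: "'a set"
  assumes "three_transp G D"
    and "finite D"
    and "\<exists>L \<in> fischer_lines G D. L \<notin> Vrad G D"
  shows "(\<forall>x \<in> Abar G D. \<exists>!f. f \<in> (\<Pi>\<^sub>E I \<in> {J. min_qideal G D J}. I)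
              \<and> finprod (Abar_add G D) f {J. min_qideal G D J} = x)
       \<and> (\<forall>I J. min_qideal G D I \<and> min_qideal G D J \<and> I \<noteq> J
              \<longrightarrow> (\<forall>x \<in> I. \<forall>y \<in> J. qmul G D x y = qzero G D))
       \<and> (\<forall>I J. min_qideal G D I \<and> min_qideal G D J
              \<longrightarrow> (\<exists>g \<in> carrier G. gact_q G g ` I = J))"
proof -
  have grp: "group G" using assms(1) unfolding three_transp_def by blast
  interpret c: conc G D
    using grp assms(1,2) by (simp add: conc_def conc_axioms_def)
  have ab: "absalg (Abar_add G D) (qmul G D) (qform G) G (gact_q G) D (\<lambda>d. qcls G D {d})"
    apply (rule absalg.intro[OF c.h_cm])
    apply (rule absalg_axioms.intro)
    apply (unfold Abar_add_simps)
    apply (rule c.h_selfinv, assumption)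
    apply (rule c.Abar_finite)
    apply (rule c.h_mul_closed, assumption+)
    apply (rule c.h_mul_comm, assumption+)
    apply (rule c.h_mul_add, assumption+)
    apply (rule c.h_form_sym, assumption+)
    apply (rule c.h_form_add, assumption+)
    apply (rule c.h_form_assoc, assumption+)
    apply (rule c.h_nondeg, assumption+)
    apply (rule grp)
    apply (rule c.h_act_closed, assumption+)
    apply (rule c.h_act_add, assumption+)
    apply (rule c.h_act_mul, assumption+)
    apply (rule c.h_act_form, assumption+)
    apply (rule c.h_act_comp, assumption+)
    apply (rule c.h_act_one, assumption+)
    apply (rule c.Dsub)
    apply (rule c.h_dl_closed, assumption+)
    apply (rule c.h_dl_conj, assumption+)
    apply (rule c.h_dl_mul, assumption+)
    apply (rule c.h_span, assumption, blast)
    apply (rule c.h_nontriv[OF assms(3)])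
    done
  interpret a: absalg "Abar_add G D" "qmul G D" "qform G" G "gact_q G" D "\<lambda>d. qcls G D {d}"
    by (rule ab)
  have ai: "a.aideal = qideal G D"
    by (rule ext) (simp add: a.aideal_def qideal_def Abar_add_simps)
  have am: "a.amin = min_qideal G D"
    by (rule ext) (simp add: a.amin_def min_qideal_def ai Abar_add_simps)
  show ?thesis using a.abs_main unfolding am Abar_add_simps .
qed


end
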